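(* Let $\mathcal D$ be universal with at least two blocks, $\mathcal B$ the block containing $\min(\mathcal D\setminus\{0\})$, $\mathbf m=\max\mathcal B$, $\mathrm M=(M,d)\in\mathfrak U_{\mathcal D}$, and $\sim$ the equivalence relation $x\sim y\iff d(x,y)\le\mathbf m$. Let $\mathrm M/\!\sim$ be the set of $\sim$-classes with the metric $d_{\min}(A,B)=\min\{d(a,b):a\in A,b\in B\}$, and let $\mathcal D_{\min}$ be its set of distances. Then $\mathcal D_{\min}$ is universal and $\mathrm M/\!\sim\ \in\mathfrak U_{\mathcal D_{\min}}$. Moreover, if $N$ is the point set of a copy of $\mathrm M/\!\sim$ in $\mathrm M/\!\sim$, then the subspace of $\mathrm M$ on $\bigcup N$ (the union of the classes belonging to $N$) is a copy of $\mathrm M$ in $\mathrm M$.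
   Context: $\mathcal D$ is a finite subset of $\mathbb R_{\ge0}$ containing $0$. $\mathfrak U_{\mathcal D}$ is the class of countable homogeneous metric spaces (every isometry between finite subspaces extends to an isometry of the space onto itself) with distance set exactly $\mathcal D$ into which every finite metric space with distances in $\mathcal D$ embeds isometrically; $\mathcal D$ is universal if this class is nonempty. A copy of a space in itself is the image of an isometric embedding of the space into itself. For $r\in\mathcal D$ with $r<\max\mathcal D$, $r^{+}$ is the smallest element of $\mathcal D$ larger than $r$; for $r>0$, $r^{-}$ is the largest element of $\mathcal D$ smaller than $r$. A block of $\mathcal D$ is a nonempty set $\mathcal B=\{b_0<b_1<\dots<b_n\}\subseteq\mathcal D\setminus\{0\}$ such that $b_0>2b_0^{-}$, $b_{i+1}=b_i^{+}$ for all $i<n$, and $b_i+b_0\ge b_{i+1}$ for all $i<n$; for universal $\mathcal D$ the blocks partition $\mathcal D\setminus\{0\}$. *)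

theory Defs
  imports Complex_Main "HOL-Library.Countable_Set"
begin

definition metric_on :: "'a set \<Rightarrow> ('a \<Rightarrow> 'a \<Rightarrow> real) \<Rightarrow> bool" where
  "metric_on M d \<longleftrightarrow>
     (\<forall>x\<in>M. \<forall>y\<in>M. d x y \<ge> 0 \<and> (d x y = 0 \<longleftrightarrow> x = y) \<and> d x y = d y x) \<and>
     (\<forall>x\<in>M. \<forall>y\<in>M. \<forall>z\<in>M. d x z \<le> d x y + d y z)"

definition dist_set :: "'a set \<Rightarrow> ('a \<Rightarrow> 'a \<Rightarrow> real) \<Rightarrow> real set" where
  "dist_set M d = {d x y | x y. x \<in> M \<and> y \<in> M}"

definition iso_emb :: "'a set \<Rightarrow> ('a \<Rightarrow> 'a \<Rightarrow> real) \<Rightarrow> 'b set \<Rightarrow> ('b \<Rightarrow> 'b \<Rightarrow> real) \<Rightarrow> ('a \<Rightarrow> 'b) \<Rightarrow> bool" where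
  "iso_emb A dA B dB f \<longleftrightarrow> f ` A \<subseteq> B \<and> (\<forall>x\<in>A. \<forall>y\<in>A. dB (f x) (f y) = dA x y)"

definition homogeneous :: "'a set \<Rightarrow> ('a \<Rightarrow> 'a \<Rightarrow> real) \<Rightarrow> bool" where
  "homogeneous M d \<longleftrightarrow>
     (\<forall>F f. F \<subseteq> M \<and> finite F \<and> iso_emb F d M d f \<longrightarrow>
        (\<exists>g. bij_betw g M M \<and> iso_emb M d M d g \<and> (\<forall>x\<in>F. g x = f x)))"

text \<open>Every finite metric space with distances in D embeds isometrically. Finite metric
  spaces are represented (up to isometry) on finite subsets of nat.\<close>
definition embeds_all_finite :: "real set \<Rightarrow> 'a set \<Rightarrow> ('a \<Rightarrow> 'a \<Rightarrow> real) \<Rightarrow> bool" where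
  "embeds_all_finite D M d \<longleftrightarrow>
     (\<forall>(F::nat set) dF. finite F \<and> metric_on F dF \<and> dist_set F dF \<subseteq> D \<longrightarrow>
        (\<exists>f. iso_emb F dF M d f))"

definition in_U :: "real set \<Rightarrow> 'a set \<Rightarrow> ('a \<Rightarrow> 'a \<Rightarrow> real) \<Rightarrow> bool" where
  "in_U D M d \<longleftrightarrow> countable M \<and> metric_on M d \<and> dist_set M d = D \<and>
     homogeneous M d \<and> embeds_all_finite D M d"

text \<open>D is universal iff U_D is nonempty (countable spaces can be taken on subsets of nat).\<close>
definition universal_dist :: "real set \<Rightarrow> bool" where
  "universal_dist D \<longleftrightarrow> (\<exists>(M::nat set) d. in_U D M d)"

definition succD :: "real set \<Rightarrow> real \<Rightarrow> real" where
  "succD D r = Min {s\<in>D. s > r}"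

definition predD :: "real set \<Rightarrow> real \<Rightarrow> real" where
  "predD D r = Max {s\<in>D. s < r}"

definition pre_block :: "real set \<Rightarrow> real set \<Rightarrow> bool" where
  "pre_block D B \<longleftrightarrow> B \<noteq> {} \<and> B \<subseteq> D - {0} \<and>
     Min B > 2 * predD D (Min B) \<and>
     (\<forall>b\<in>B. b < Max B \<longrightarrow> succD D b \<in> B \<and> b + Min B \<ge> succD D b)"

text \<open>Blocks are the maximal such sets (so that they partition D - {0}).\<close>
definition blocks :: "real set \<Rightarrow> real set set" where
  "blocks D = {B. pre_block D B \<and> (\<forall>B'. pre_block D B' \<and> B \<subseteq> B' \<longrightarrow> B' = B)}"

definition close_rel :: "'a set \<Rightarrow> ('a \<Rightarrow> 'a \<Rightarrow> real) \<Rightarrow> real \<Rightarrow> ('a \<times> 'a) set" where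
  "close_rel M d m = {(x, y). x \<in> M \<and> y \<in> M \<and> d x y \<le> m}"

definition dmin :: "('a \<Rightarrow> 'a \<Rightarrow> real) \<Rightarrow> 'a set \<Rightarrow> 'a set \<Rightarrow> real" where
  "dmin d A B = Min {d a b | a b. a \<in> A \<and> b \<in> B}"

end

theory Submission
  imports Defs
begin


definition EPs :: "real set \<Rightarrow> 'a set \<Rightarrow> ('a \<Rightarrow> 'a \<Rightarrow> real) \<Rightarrow> bool" where
  "EPs D A d \<longleftrightarrow> (\<forall>F t. finite F \<and> F \<subseteq> A \<and> (\<forall>x\<in>F. t x \<in> D \<and> t x > 0) \<and>
      (\<forall>x\<in>F. \<forall>y\<in>F. \<bar>t x - t y\<bar> \<le> d x y \<and> d x y \<le> t x + t y) \<longrightarrow>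
      (\<exists>p\<in>A. p \<notin> F \<and> (\<forall>x\<in>F. d p x = t x)))"

locale UL =
  fixes D :: "real set" and M :: "'a set" and d :: "'a \<Rightarrow> 'a \<Rightarrow> real"
  assumes inU: "in_U D M d" and finD: "finite D" and zD: "0 \<in> D"
begin

lemma met: "metric_on M d" using inU by (simp add: in_U_def)
lemma dsD: "dist_set M d = D" using inU by (simp add: in_U_def)
lemma hom: "homogeneous M d" using inU by (simp add: in_U_def)
lemma emb: "embeds_all_finite D M d" using inU by (simp add: in_U_def)
lemma cntM: "countable M" using inU by (simp add: in_U_def)

lemma d_nonneg: "x \<in> M \<Longrightarrow> y \<in> M \<Longrightarrow> d x y \<ge> 0" using met by (simp add: metric_on_def)
lemma d_eq0: "x \<in> M \<Longrightarrow> y \<in> M \<Longrightarrow> d x y = 0 \<longleftrightarrow> x = y" using met by (simp add: metric_on_def)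
lemma d_sym: "x \<in> M \<Longrightarrow> y \<in> M \<Longrightarrow> d x y = d y x" using met by (simp add: metric_on_def)
lemma d_tri: "x \<in> M \<Longrightarrow> y \<in> M \<Longrightarrow> z \<in> M \<Longrightarrow> d x z \<le> d x y + d y z"
  using met by (simp add: metric_on_def)
lemma d_D: "x \<in> M \<Longrightarrow> y \<in> M \<Longrightarrow> d x y \<in> D" using dsD by (auto simp: dist_set_def)
lemma M_ne: "M \<noteq> {}" using zD dsD by (auto simp: dist_set_def)
lemma d_self: "x \<in> M \<Longrightarrow> d x x = 0" using d_eq0 by simp

lemma EP:
  assumes fin: "finite F" and FM: "F \<subseteq> M" and tD: "\<forall>x\<in>F. t x \<in> D \<and> t x > 0"
    and cons: "\<forall>x\<in>F. \<forall>y\<in>F. \<bar>t x - t y\<bar> \<le> d x y \<and> d x y \<le> t x + t y"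
  shows "\<exists>p\<in>M. p \<notin> F \<and> (\<forall>x\<in>F. d p x = t x)"
proof -
  obtain e where e: "bij_betw e {0..<card F} F" using ex_bij_betw_nat_finite[OF fin] by blast
  define k where "k = card F"
  have e': "bij_betw e {0..<k} F" using e k_def by simp
  have eM: "i < k \<Longrightarrow> e i \<in> M" for i using e' FM by (auto simp: bij_betw_def)
  have eF: "i < k \<Longrightarrow> e i \<in> F" for i using e' by (auto simp: bij_betw_def)
  have einj: "i < k \<Longrightarrow> j < k \<Longrightarrow> e i = e j \<Longrightarrow> i = j" for i j
    using e' by (auto simp: bij_betw_def inj_on_def)
  define dF where "dF i j = (if i = k \<and> j = k then 0 else if i = k then t (e j)
     else if j = k then t (e i) else d (e i) (e j))" for i j
  define K where "K = {0..k}"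
  have inK: "i \<in> K \<longleftrightarrow> i < k \<or> i = k" for i by (auto simp: K_def)
  have tpos: "i < k \<Longrightarrow> t (e i) > 0" for i using tD eF by blast
  have tDD: "i < k \<Longrightarrow> t (e i) \<in> D" for i using tD eF by blast
  have c1: "i < k \<Longrightarrow> j < k \<Longrightarrow> \<bar>t (e i) - t (e j)\<bar> \<le> d (e i) (e j)" for i j
    using cons eF by blast
  have c2: "i < k \<Longrightarrow> j < k \<Longrightarrow> d (e i) (e j) \<le> t (e i) + t (e j)" for i j
    using cons eF by blast
  have met': "metric_on K dF"
    unfolding metric_on_def
  proof (intro conjI ballI)
    fix i j assume i: "i \<in> K" and j: "j \<in> K"
    show "dF i j \<ge> 0" using i j tpos d_nonneg eM unfolding inK dF_def
      by (auto simp: less_imp_le)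
    show "(dF i j = 0) = (i = j)" using i j tpos d_eq0 eM einj unfolding inK dF_def by force
    show "dF i j = dF j i" using i j d_sym eM unfolding inK dF_def by auto
  next
    fix i j l assume i: "i \<in> K" and j: "j \<in> K" and l: "l \<in> K"
    show "dF i l \<le> dF i j + dF j l"
      using i j l unfolding inK dF_def
      apply (elim disjE)
      using c1 c2 d_tri eM tpos d_sym d_nonneg
      by (auto simp: abs_le_iff less_imp_le) (smt (verit) c1 c2 d_sym eM)+
  qed
  have dsub: "dist_set K dF \<subseteq> D"
  proof
    fix r assume "r \<in> dist_set K dF"
    then obtain i j where ij: "i \<in> K" "j \<in> K" "r = dF i j" by (auto simp: dist_set_def)
    then show "r \<in> D" unfolding inK dF_def using zD tDD d_D eM by auto
  qed
  have finK: "finite K" by (simp add: K_def)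
  obtain \<phi> where phi: "iso_emb K dF M d \<phi>"
    using emb finK met' dsub unfolding embeds_all_finite_def by blast
  have phiM: "i \<in> K \<Longrightarrow> \<phi> i \<in> M" for i using phi by (auto simp: iso_emb_def)
  have phid: "i \<in> K \<Longrightarrow> j \<in> K \<Longrightarrow> d (\<phi> i) (\<phi> j) = dF i j" for i j
    using phi by (auto simp: iso_emb_def)
  have phiinj: "inj_on \<phi> K"
  proof (rule inj_onI)
    fix i j assume "i \<in> K" "j \<in> K" "\<phi> i = \<phi> j"
    then have "dF i j = 0" using phid phiM d_self by metis
    then show "i = j" using met' \<open>i \<in> K\<close> \<open>j \<in> K\<close> by (simp add: metric_on_def)
  qed
  define K0 where "K0 = {0..<k}"
  have K0K: "K0 \<subseteq> K" by (auto simp: K0_def K_def)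
  define f0 where "f0 y = e (inv_into K \<phi> y)" for y
  have f0e: "i < k \<Longrightarrow> f0 (\<phi> i) = e i" for i
    using phiinj inK unfolding f0_def by (simp add: inv_into_f_f)
  have iso0: "iso_emb (\<phi> ` K0) d M d f0"
    unfolding iso_emb_def
  proof (intro conjI ballI)
    show "f0 ` \<phi> ` K0 \<subseteq> M" using f0e eM by (auto simp: K0_def)
  next
    fix x y assume "x \<in> \<phi> ` K0" "y \<in> \<phi> ` K0"
    then obtain i j where "i < k" "j < k" "x = \<phi> i" "y = \<phi> j" by (auto simp: K0_def)
    then show "d (f0 x) (f0 y) = d x y" using f0e phid inK dF_def by auto
  qed
  obtain g where g: "bij_betw g M M" "iso_emb M d M d g" "\<forall>x\<in>\<phi> ` K0. g x = f0 x"
    using hom iso0 K0K phiM unfolding homogeneous_def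
    by (metis finite_atLeastLessThan finite_imageI K0_def image_subset_iff subsetD)
  have kK: "k \<in> K" by (simp add: inK)
  define p where "p = g (\<phi> k)"
  have pM: "p \<in> M" using g(2) phiM kK by (auto simp: p_def iso_emb_def)
  have pd: "d p (e i) = t (e i)" if "i < k" for i
  proof -
    have "g (\<phi> i) = e i" using g(3) f0e that by (auto simp: K0_def)
    then have "d p (e i) = d (g (\<phi> k)) (g (\<phi> i))" by (simp add: p_def)
    also have "\<dots> = d (\<phi> k) (\<phi> i)" using g(2) phiM kK that inK by (auto simp: iso_emb_def)
    also have "\<dots> = t (e i)" using phid kK that inK dF_def by auto
    finally show ?thesis .
  qed
  have allF: "x \<in> F \<Longrightarrow> \<exists>i<k. x = e i" for x using e' by (auto simp: bij_betw_def image_iff)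
  show ?thesis
  proof (intro bexI[OF _ pM] conjI ballI)
    show "p \<notin> F"
    proof
      assume "p \<in> F" then obtain i where "i < k" "p = e i" using allF by blast
      then show False using pd tpos d_self eM by force
    qed
  next
    fix x assume "x \<in> F" then show "d p x = t x" using allF pd by blast
  qed
qed

lemma EPs_M: "EPs D M d" unfolding EPs_def using EP by blast

end



locale QL = UL +
  fixes m :: real
  assumes mD: "m \<in> D" and mpos: "m > 0" and gap: "\<forall>s\<in>D. m < s \<longrightarrow> 2*m < s"
begin

abbreviation "R \<equiv> close_rel M d m"
abbreviation "Q \<equiv> M // R"
abbreviation "cls x \<equiv> R `` {x}"

lemma R_iff: "(x, y) \<in> R \<longleftrightarrow> x \<in> M \<and> y \<in> M \<and> d x y \<le> m"
  by (simp add: close_rel_def)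

lemma equivR: "equiv M R"
proof (rule equivI)
  show "R \<subseteq> M \<times> M" by (auto simp: close_rel_def)
  show "refl_on M R" unfolding refl_on_def close_rel_def using d_self mpos by auto
  show "sym R" unfolding sym_def close_rel_def using d_sym by auto
  show "trans R" unfolding trans_def close_rel_def
  proof (clarsimp)
    fix x y z assume "x \<in> M" "y \<in> M" "z \<in> M" "d x y \<le> m" "d y z \<le> m"
    then have "d x z \<le> 2*m" using d_tri[of x y z] by simp
    moreover have "d x z \<in> D" using \<open>x \<in> M\<close> \<open>z \<in> M\<close> d_D by simp
    ultimately show "d x z \<le> m" using gap by force
  qed
qed

lemma mem_cls: "x \<in> M \<Longrightarrow> y \<in> cls x \<longleftrightarrow> y \<in> M \<and> d x y \<le> m"
  by (simp add: close_rel_def)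

lemma cls_Q: "x \<in> M \<Longrightarrow> cls x \<in> Q" by (rule quotientI)
lemma Q_sub: "X \<in> Q \<Longrightarrow> X \<subseteq> M" using in_quotient_imp_subset[OF equivR] by blast
lemma Q_ne: "X \<in> Q \<Longrightarrow> X \<noteq> {}" using in_quotient_imp_non_empty[OF equivR] by blast
lemma self_cls: "x \<in> M \<Longrightarrow> x \<in> cls x" using equiv_class_self[OF equivR] by blast
lemma cls_of: "X \<in> Q \<Longrightarrow> x \<in> X \<Longrightarrow> cls x = X"
proof -
  assume X: "X \<in> Q" and x: "x \<in> X"
  obtain x0 where "X = cls x0" "x0 \<in> M" using X by (rule quotientE)
  then have "(x0, x) \<in> R" using x by simp
  then have "cls x0 = cls x" by (rule equiv_class_eq[OF equivR])
  then show ?thesis using \<open>X = cls x0\<close> by simp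
qed
lemma same_cls: "X \<in> Q \<Longrightarrow> x \<in> X \<Longrightarrow> y \<in> X \<Longrightarrow> d x y \<le> m"
  using cls_of mem_cls Q_sub by blast
lemma eq_cls: "X \<in> Q \<Longrightarrow> Y \<in> Q \<Longrightarrow> x \<in> X \<Longrightarrow> y \<in> Y \<Longrightarrow> (X = Y \<longleftrightarrow> d x y \<le> m)"
  using quotient_eq_iff[OF equivR] R_iff Q_sub by blast
lemma cls_eq_iff: "x \<in> M \<Longrightarrow> y \<in> M \<Longrightarrow> cls x = cls y \<longleftrightarrow> d x y \<le> m"
  using eq_cls cls_Q self_cls by blast

lemma QE: "X \<in> Q \<Longrightarrow> (\<And>x. x \<in> M \<Longrightarrow> X = cls x \<Longrightarrow> P) \<Longrightarrow> P"
  by (metis quotientE)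

lemma cntQ: "countable Q"
  unfolding quotient_def using cntM by (simp add: UNION_singleton_eq_range)

definition "DS X Y = {d a b | a b. a \<in> X \<and> b \<in> Y}"

lemma DS_sub: "X \<in> Q \<Longrightarrow> Y \<in> Q \<Longrightarrow> DS X Y \<subseteq> D"
  using d_D Q_sub unfolding DS_def by blast
lemma DS_fin: "X \<in> Q \<Longrightarrow> Y \<in> Q \<Longrightarrow> finite (DS X Y)"
  using DS_sub finD finite_subset by blast
lemma DS_ne: "X \<in> Q \<Longrightarrow> Y \<in> Q \<Longrightarrow> DS X Y \<noteq> {}"
proof -
  assume "X \<in> Q" "Y \<in> Q"
  then obtain a b where "a \<in> X" "b \<in> Y" using Q_ne by blast
  then have "d a b \<in> DS X Y" unfolding DS_def by blast
  then show ?thesis by blast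
qed
lemma dmin_DS: "dmin d X Y = Min (DS X Y)" by (simp add: dmin_def DS_def)

lemma dmin_le: "X \<in> Q \<Longrightarrow> Y \<in> Q \<Longrightarrow> a \<in> X \<Longrightarrow> b \<in> Y \<Longrightarrow> dmin d X Y \<le> d a b"
proof -
  assume XY: "X \<in> Q" "Y \<in> Q" and ab: "a \<in> X" "b \<in> Y"
  have "d a b \<in> DS X Y" using ab unfolding DS_def by blast
  then show ?thesis unfolding dmin_DS using DS_fin[OF XY] by simp
qed

lemma dmin_ex: "X \<in> Q \<Longrightarrow> Y \<in> Q \<Longrightarrow> \<exists>a\<in>X. \<exists>b\<in>Y. d a b = dmin d X Y"
proof -
  assume XY: "X \<in> Q" "Y \<in> Q"
  have "Min (DS X Y) \<in> DS X Y" using DS_fin[OF XY] DS_ne[OF XY] by (rule Min_in)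
  then obtain a b where "a \<in> X" "b \<in> Y" "Min (DS X Y) = d a b" unfolding DS_def by auto
  then show ?thesis unfolding dmin_DS by auto
qed

lemma dmin_D: "X \<in> Q \<Longrightarrow> Y \<in> Q \<Longrightarrow> dmin d X Y \<in> D"
proof -
  assume XY: "X \<in> Q" "Y \<in> Q"
  then obtain a b where ab: "a \<in> X" "b \<in> Y" "d a b = dmin d X Y" using dmin_ex by blast
  then have "a \<in> M" "b \<in> M" using Q_sub XY by auto
  then show ?thesis using ab d_D by metis
qed

lemma dmin_self: "X \<in> Q \<Longrightarrow> dmin d X X = 0"
proof -
  assume X: "X \<in> Q"
  then obtain a where a: "a \<in> X" using Q_ne by blast
  then have aM: "a \<in> M" using Q_sub X by auto
  have "dmin d X X \<le> 0" using dmin_le[OF X X a a] d_self[OF aM] by simp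
  moreover have "dmin d X X \<ge> 0"
  proof -
    obtain u v where uv: "u \<in> X" "v \<in> X" "d u v = dmin d X X" using dmin_ex[OF X X] by blast
    then have "u \<in> M" "v \<in> M" using Q_sub X by auto
    then show ?thesis using uv d_nonneg by metis
  qed
  ultimately show ?thesis by simp
qed

lemma dmin_sym: "X \<in> Q \<Longrightarrow> Y \<in> Q \<Longrightarrow> dmin d X Y = dmin d Y X"
proof -
  assume XY: "X \<in> Q" "Y \<in> Q"
  have "DS X Y = DS Y X" unfolding DS_def using d_sym Q_sub[OF XY(1)] Q_sub[OF XY(2)] by blast
  then show ?thesis by (simp add: dmin_DS)
qed

lemma dmin_nonneg: "X \<in> Q \<Longrightarrow> Y \<in> Q \<Longrightarrow> dmin d X Y \<ge> 0"
proof -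
  assume XY: "X \<in> Q" "Y \<in> Q"
  then obtain a b where "a \<in> X" "b \<in> Y" "d a b = dmin d X Y" using dmin_ex by blast
  moreover have "a \<in> M" "b \<in> M" using Q_sub XY \<open>a \<in> X\<close> \<open>b \<in> Y\<close> by auto
  ultimately show ?thesis using d_nonneg[of a b] by simp
qed

lemma dmin_big: "X \<in> Q \<Longrightarrow> Y \<in> Q \<Longrightarrow> X \<noteq> Y \<Longrightarrow> dmin d X Y > m"
proof -
  assume XY: "X \<in> Q" "Y \<in> Q" "X \<noteq> Y"
  then obtain a b where ab: "a \<in> X" "b \<in> Y" "d a b = dmin d X Y" using dmin_ex by blast
  then have "\<not> d a b \<le> m" using eq_cls XY by blast
  then show ?thesis using ab by simp
qed

lemma dmin_0: assumes "X \<in> Q" "Y \<in> Q" shows "dmin d X Y = 0 \<longleftrightarrow> X = Y"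
proof (cases "X = Y")
  case True then show ?thesis using dmin_self[OF assms(1)] by simp
next
  case False then show ?thesis using dmin_big[OF assms False] mpos by simp
qed

lemma P1: assumes X: "X \<in> Q" and Y: "Y \<in> Q" and x: "x \<in> X"
  shows "\<exists>y\<in>Y. d x y = dmin d X Y"
proof (cases "X = Y")
  case True then show ?thesis using x dmin_self X Q_sub d_self by (metis subsetD)
next
  case False
  define r where "r = dmin d X Y"
  have rm: "r > m" using dmin_big X Y False r_def by simp
  obtain x0 y0 where x0: "x0 \<in> X" and y0: "y0 \<in> Y" and r: "d x0 y0 = r"
    using dmin_ex[OF X Y] r_def by blast
  have xM: "x \<in> M" and x0M: "x0 \<in> M" and y0M: "y0 \<in> M" using X Y x x0 y0 Q_sub by blast+
  have t: "d x x0 \<le> m" using same_cls X x x0 by blast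
  have low: "d x y0 \<ge> r" using dmin_le X Y x y0 r_def by blast
  have up: "d x y0 \<le> r + m" using d_tri[OF xM x0M y0M] t r by simp
  show ?thesis
  proof (cases "d x y0 = r")
    case True then show ?thesis using y0 r_def by blast
  next
    case False
    have xx0: "x \<noteq> y0" "x0 \<noteq> y0" using low r rm d_self xM x0M mpos by force+
    define F where "F = {x, x0, y0}"
    define t where "t z = (if z = y0 then m else r)" for z
    have rD: "r \<in> D" using dmin_D X Y r_def by simp
    obtain p where p: "p \<in> M" "p \<notin> F" "\<forall>z\<in>F. d p z = t z"
    proof -
      have "\<exists>p\<in>M. p \<notin> F \<and> (\<forall>z\<in>F. d p z = t z)"
      proof (rule EP)
        show "finite F" by (simp add: F_def)
        show "F \<subseteq> M" using xM x0M y0M by (simp add: F_def)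
        show "\<forall>z\<in>F. t z \<in> D \<and> t z > 0" using rD mD mpos rm by (auto simp: t_def)
        show "\<forall>z\<in>F. \<forall>w\<in>F. \<bar>t z - t w\<bar> \<le> d z w \<and> d z w \<le> t z + t w"
          unfolding F_def t_def using xx0 t low up r rm mpos d_sym[OF xM x0M] d_sym[OF xM y0M]
            d_sym[OF x0M y0M] d_nonneg[OF xM x0M] d_self xM x0M y0M
          by (auto simp: abs_le_iff)
      qed
      then show ?thesis using that by blast
    qed
    have "p \<in> Y" using p y0 eq_cls[OF Y cls_Q[OF p(1)]] self_cls[OF p(1)] t_def F_def d_sym[OF p(1) y0M]
      by (metis cls_of[OF Y y0] insertCI mem_cls[OF y0M] order_refl)
    moreover have "d x p = r" using p xx0 F_def t_def d_sym[OF xM p(1)] by auto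
    ultimately show ?thesis using r_def by blast
  qed
qed

lemma Bnd: "X \<in> Q \<Longrightarrow> Y \<in> Q \<Longrightarrow> x \<in> X \<Longrightarrow> y \<in> Y \<Longrightarrow> d x y \<le> dmin d X Y + m"
proof -
  assume XY: "X \<in> Q" "Y \<in> Q" and xy: "x \<in> X" "y \<in> Y"
  obtain y' where y': "y' \<in> Y" "d x y' = dmin d X Y" using P1[OF XY xy(1)] by blast
  have M3: "x \<in> M" "y' \<in> M" "y \<in> M" using Q_sub XY xy y' by auto
  have "d x y \<le> d x y' + d y' y" using d_tri[OF M3] .
  moreover have "d y' y \<le> m" using same_cls[OF XY(2) y'(1) xy(2)] .
  ultimately show ?thesis using y' by simp
qed

lemma dmin_tri: "X \<in> Q \<Longrightarrow> Y \<in> Q \<Longrightarrow> Z \<in> Q \<Longrightarrow> dmin d X Z \<le> dmin d X Y + dmin d Y Z"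
proof -
  assume XYZ: "X \<in> Q" "Y \<in> Q" "Z \<in> Q"
  obtain a b where ab: "a \<in> X" "b \<in> Y" "d a b = dmin d X Y" using dmin_ex[OF XYZ(1,2)] by blast
  obtain c where c: "c \<in> Z" "d b c = dmin d Y Z" using P1[OF XYZ(2,3) ab(2)] by blast
  have M3: "a \<in> M" "b \<in> M" "c \<in> M" using Q_sub XYZ ab c by auto
  have "dmin d X Z \<le> d a c" using dmin_le[OF XYZ(1,3) ab(1) c(1)] .
  also have "\<dots> \<le> d a b + d b c" using d_tri[OF M3] .
  finally show ?thesis using ab c by simp
qed

lemma metQ: "metric_on Q (dmin d)"
  unfolding metric_on_def
proof (intro conjI ballI)
  fix X Y Z assume XYZ: "X \<in> Q" "Y \<in> Q" "Z \<in> Q"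
  show "dmin d X Z \<le> dmin d X Y + dmin d Y Z" by (rule dmin_tri[OF XYZ])
next
  fix X Y assume XY: "X \<in> Q" "Y \<in> Q"
  show "0 \<le> dmin d X Y" by (rule dmin_nonneg[OF XY])
  show "(dmin d X Y = 0) = (X = Y)" by (rule dmin_0[OF XY])
  show "dmin d X Y = dmin d Y X" by (rule dmin_sym[OF XY])
qed

end



context QL
begin

lemma hom_ext: "F \<subseteq> M \<Longrightarrow> finite F \<Longrightarrow> iso_emb F d M d f \<Longrightarrow>
   \<exists>g. bij_betw g M M \<and> iso_emb M d M d g \<and> (\<forall>x\<in>F. g x = f x)"
proof -
  assume a: "F \<subseteq> M" "finite F" "iso_emb F d M d f"
  have "F \<subseteq> M \<and> finite F \<and> iso_emb F d M d f" using a by simp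
  then show ?thesis using hom[unfolded homogeneous_def, rule_format, of F f] by simp
qed

lemma K_step_cons:
  assumes X: "X \<in> Q" and G: "G \<subseteq> Q" and XG: "X \<notin> G" and w: "w \<in> X"
    and rep: "\<forall>Y\<in>G. rep Y \<in> Y" "\<forall>Y\<in>G. \<forall>Y'\<in>G. d (rep Y) (rep Y') = dmin d Y Y'"
    and t: "t = (\<lambda>z. if z = w then m else dmin d X (cls z))"
    and z1: "z1 \<in> insert w (rep ` G)" and z2: "z2 \<in> insert w (rep ` G)"
  shows "\<bar>t z1 - t z2\<bar> \<le> d z1 z2 \<and> d z1 z2 \<le> t z1 + t z2"
proof -
  have wM: "w \<in> M" using Q_sub X w by auto
  have clsrep: "Y \<in> G \<Longrightarrow> cls (rep Y) = Y" for Y using cls_of G rep(1) by blast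
  have repM: "Y \<in> G \<Longrightarrow> rep Y \<in> M" for Y using Q_sub G rep(1) by blast
  have neq: "Y \<in> G \<Longrightarrow> rep Y \<noteq> w" for Y
  proof
    assume Y: "Y \<in> G" and e: "rep Y = w"
    then have "X = Y" using eq_cls[OF X _ w, of Y w] G rep(1) d_self[OF wM] mpos by auto
    then show False using XG Y by simp
  qed
  have tw: "t w = m" using t by simp
  have trep: "Y \<in> G \<Longrightarrow> t (rep Y) = dmin d X Y" for Y using t neq clsrep by simp
  have big: "Y \<in> G \<Longrightarrow> dmin d X Y > m" for Y using dmin_big X G XG by blast
  have wr: "Y \<in> G \<Longrightarrow> \<bar>t w - t (rep Y)\<bar> \<le> d w (rep Y) \<and> d w (rep Y) \<le> t w + t (rep Y)" for Y
  proof -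
    assume Y: "Y \<in> G"
    have YQ: "Y \<in> Q" using G Y by blast
    have "dmin d X Y \<le> d w (rep Y)" using dmin_le[OF X YQ w] rep(1) Y by blast
    moreover have "d w (rep Y) \<le> dmin d X Y + m" using Bnd[OF X YQ w] rep(1) Y by blast
    ultimately show ?thesis using tw trep[OF Y] big[OF Y] by (simp add: abs_le_iff)
  qed
  have rr: "Y \<in> G \<Longrightarrow> Y' \<in> G \<Longrightarrow> \<bar>t (rep Y) - t (rep Y')\<bar> \<le> d (rep Y) (rep Y') \<and> d (rep Y) (rep Y') \<le> t (rep Y) + t (rep Y')" for Y Y'
  proof -
    assume Y: "Y \<in> G" and Y': "Y' \<in> G"
    have YQ: "Y \<in> Q" "Y' \<in> Q" using G Y Y' by auto
    have a: "dmin d X Y \<le> dmin d X Y' + dmin d Y' Y" using dmin_tri[OF X YQ(2) YQ(1)] .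
    have b: "dmin d X Y' \<le> dmin d X Y + dmin d Y Y'" using dmin_tri[OF X YQ(1) YQ(2)] .
    have c: "dmin d Y Y' \<le> dmin d Y X + dmin d X Y'" using dmin_tri[OF YQ(1) X YQ(2)] .
    have s: "dmin d Y' Y = dmin d Y Y'" "dmin d Y X = dmin d X Y" using dmin_sym X YQ by auto
    show ?thesis using a b c s trep[OF Y] trep[OF Y'] rep(2) Y Y' by (simp add: abs_le_iff)
  qed
  show ?thesis
  proof -
    consider "z1 = w" "z2 = w" | Y where "Y \<in> G" "z1 = w" "z2 = rep Y"
      | Y where "Y \<in> G" "z1 = rep Y" "z2 = w" | Y Y' where "Y \<in> G" "Y' \<in> G" "z1 = rep Y" "z2 = rep Y'"
      using z1 z2 by blast
    then show ?thesis
    proof cases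
      case 1 then show ?thesis using d_self[OF wM] tw mpos by simp
    next
      case (2 Y) then show ?thesis using wr by blast
    next
      case (3 Y) then show ?thesis using wr[of Y] d_sym[OF wM repM[of Y]] by (simp add: abs_minus_commute)
    next
      case (4 Y Y') then show ?thesis using rr by blast
    qed
  qed
qed

lemma K: "finite G \<Longrightarrow> G \<subseteq> Q \<Longrightarrow>
   \<exists>rep. (\<forall>X\<in>G. rep X \<in> X) \<and> (\<forall>X\<in>G. \<forall>Y\<in>G. d (rep X) (rep Y) = dmin d X Y)"
proof (induction G rule: finite_induct)
  case empty then show ?case by simp
next
  case (insert X G)
  have X: "X \<in> Q" and G: "G \<subseteq> Q" using insert.prems by auto
  obtain rep where rep: "\<forall>Y\<in>G. rep Y \<in> Y" "\<forall>Y\<in>G. \<forall>Y'\<in>G. d (rep Y) (rep Y') = dmin d Y Y'"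
    using insert.IH G by blast
  obtain w where w: "w \<in> X" using Q_ne X by blast
  have wM: "w \<in> M" using Q_sub X w by auto
  define t where "t = (\<lambda>z. if z = w then m else dmin d X (cls z))"
  define F where "F = insert w (rep ` G)"
  have clsrep: "Y \<in> G \<Longrightarrow> cls (rep Y) = Y" for Y using cls_of G rep(1) by blast
  have repM: "Y \<in> G \<Longrightarrow> rep Y \<in> M" for Y using Q_sub G rep(1) by blast
  have neq: "Y \<in> G \<Longrightarrow> rep Y \<noteq> w" for Y
  proof
    assume Y: "Y \<in> G" and e: "rep Y = w"
    then have "X = Y" using eq_cls[OF X _ w, of Y w] G rep(1) d_self[OF wM] mpos by auto
    then show False using insert.hyps Y by simp
  qed
  have "\<exists>p\<in>M. p \<notin> F \<and> (\<forall>z\<in>F. d p z = t z)"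
  proof (rule EP)
    show "finite F" using insert.hyps by (simp add: F_def)
    show "F \<subseteq> M" using wM repM by (auto simp: F_def)
    show "\<forall>z\<in>F. t z \<in> D \<and> t z > 0"
    proof
      fix z assume "z \<in> F"
      then consider "z = w" | Y where "Y \<in> G" "z = rep Y" by (auto simp: F_def)
      then show "t z \<in> D \<and> t z > 0"
      proof cases
        case 1 then show ?thesis using mD mpos t_def by simp
      next
        case (2 Y)
        have YQ: "Y \<in> Q" using G 2 by auto
        have XY: "X \<noteq> Y" using 2 insert.hyps by auto
        have "t z = dmin d X Y" using t_def neq clsrep 2 by simp
        moreover have "dmin d X Y \<in> D" "dmin d X Y > m" using dmin_D[OF X YQ] dmin_big[OF X YQ XY] by auto
        ultimately show ?thesis using mpos by simp
      qed
    qed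
    show "\<forall>z1\<in>F. \<forall>z2\<in>F. \<bar>t z1 - t z2\<bar> \<le> d z1 z2 \<and> d z1 z2 \<le> t z1 + t z2"
      using K_step_cons[OF X G insert.hyps(2) w rep t_def] F_def by blast
  qed
  then obtain p where p: "p \<in> M" "p \<notin> F" "\<forall>z\<in>F. d p z = t z" by blast
  have pX: "p \<in> X"
  proof -
    have "d p w = m" using p(3) t_def F_def by simp
    then have "d w p \<le> m" using d_sym[OF wM p(1)] by simp
    then have "p \<in> cls w" using mem_cls[OF wM] p(1) by simp
    then show ?thesis using cls_of[OF X w] by simp
  qed
  define rep' where "rep' = rep(X := p)"
  show ?case
  proof (intro exI[of _ rep'] conjI ballI)
    fix Y assume "Y \<in> insert X G" then show "rep' Y \<in> Y"
      using pX rep(1) insert.hyps(2) by (auto simp: rep'_def)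
  next
    fix Y Y' assume Y: "Y \<in> insert X G" and Y': "Y' \<in> insert X G"
    have pY: "Z \<in> G \<Longrightarrow> d p (rep Z) = dmin d X Z" for Z
      using p(3) F_def t_def neq clsrep by auto
    have XG: "X \<notin> G" using insert.hyps(2) .
    show "d (rep' Y) (rep' Y') = dmin d Y Y'"
    proof (cases "Y = X")
      case True note YX = True
      show ?thesis
      proof (cases "Y' = X")
        case True then show ?thesis using YX d_self[OF p(1)] dmin_self[OF X] by (simp add: rep'_def)
      next
        case False then have "Y' \<in> G" using Y' by simp
        then show ?thesis using YX False pY XG by (auto simp: rep'_def)
      qed
    next
      case False note YX = False
      then have YG: "Y \<in> G" using Y by simp
      show ?thesis
      proof (cases "Y' = X")
        case True
        have "d (rep Y) p = d p (rep Y)" using d_sym[OF repM[OF YG] p(1)] .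
        then show ?thesis using YX True pY[OF YG] dmin_sym[OF X] G YG by (auto simp: rep'_def)
      next
        case False then have "Y' \<in> G" using Y' by simp
        then show ?thesis using YX False rep(2) YG by (auto simp: rep'_def)
      qed
    qed
  qed
qed

lemma aut_cls:
  assumes g: "bij_betw g M M" "iso_emb M d M d g" and x: "x \<in> M"
  shows "g ` cls x = cls (g x)"
proof
  have gx: "g x \<in> M" using g x by (auto simp: bij_betw_def)
  show "g ` cls x \<subseteq> cls (g x)"
  proof
    fix z assume "z \<in> g ` cls x"
    then obtain y where y: "y \<in> cls x" "z = g y" by blast
    then have yM: "y \<in> M" and dxy: "d x y \<le> m" using mem_cls[OF x] by auto
    have "d (g x) (g y) = d x y" using g(2) x yM by (auto simp: iso_emb_def)
    then show "z \<in> cls (g x)" using mem_cls[OF gx] y g(1) yM dxy by (auto simp: bij_betw_def)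
  qed
  show "cls (g x) \<subseteq> g ` cls x"
  proof
    fix z assume z: "z \<in> cls (g x)"
    then have zM: "z \<in> M" and dz: "d (g x) z \<le> m" using mem_cls[OF gx] by auto
    then obtain y where y: "y \<in> M" "z = g y" using g(1) by (auto simp: bij_betw_def)
    have "d (g x) (g y) = d x y" using g(2) x y by (auto simp: iso_emb_def)
    then have "y \<in> cls x" using mem_cls[OF x] y dz by auto
    then show "z \<in> g ` cls x" using y by blast
  qed
qed

lemma aut_Q:
  assumes g: "bij_betw g M M" "iso_emb M d M d g" and X: "X \<in> Q"
  shows "g ` X \<in> Q"
proof -
  obtain x where x: "x \<in> M" "X = cls x" using X by (rule QE)
  have "g x \<in> M" using g x by (auto simp: bij_betw_def)
  then show ?thesis using aut_cls[OF g x(1)] x cls_Q by simp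
qed

lemma aut_dmin:
  assumes g: "iso_emb M d M d g" and X: "X \<subseteq> M" and Y: "Y \<subseteq> M"
  shows "dmin d (g ` X) (g ` Y) = dmin d X Y"
proof -
  have "DS (g ` X) (g ` Y) = DS X Y"
  proof
    show "DS (g ` X) (g ` Y) \<subseteq> DS X Y"
    proof
      fix r assume "r \<in> DS (g ` X) (g ` Y)"
      then obtain a b where ab: "a \<in> X" "b \<in> Y" "r = d (g a) (g b)" unfolding DS_def by blast
      have "a \<in> M" "b \<in> M" using ab X Y by auto
      then have "r = d a b" using g ab by (auto simp: iso_emb_def)
      then show "r \<in> DS X Y" using ab unfolding DS_def by blast
    qed
    show "DS X Y \<subseteq> DS (g ` X) (g ` Y)"
    proof
      fix r assume "r \<in> DS X Y"
      then obtain a b where ab: "a \<in> X" "b \<in> Y" "r = d a b" unfolding DS_def by blast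
      have "a \<in> M" "b \<in> M" using ab X Y by auto
      then have "r = d (g a) (g b)" using g ab by (auto simp: iso_emb_def)
      then show "r \<in> DS (g ` X) (g ` Y)" using ab unfolding DS_def by blast
    qed
  qed
  then show ?thesis by (simp add: dmin_DS)
qed

lemma aut_bij:
  assumes g: "bij_betw g M M" "iso_emb M d M d g"
  shows "bij_betw (\<lambda>X. g ` X) Q Q"
proof (rule bij_betw_imageI)
  show "inj_on (\<lambda>X. g ` X) Q"
  proof (rule inj_onI)
    fix X Y assume X: "X \<in> Q" and Y: "Y \<in> Q" and e: "g ` X = g ` Y"
    have "inj_on g M" using g(1) by (simp add: bij_betw_def)
    then show "X = Y" using e Q_sub[OF X] Q_sub[OF Y] by (simp add: inj_on_image_eq_iff)
  qed
  show "(\<lambda>X. g ` X) ` Q = Q"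
  proof
    show "(\<lambda>X. g ` X) ` Q \<subseteq> Q" using aut_Q[OF g] by blast
    show "Q \<subseteq> (\<lambda>X. g ` X) ` Q"
    proof
      fix Y assume Y: "Y \<in> Q"
      obtain y where y: "y \<in> M" "Y = cls y" using Y by (rule QE)
      then obtain x where x: "x \<in> M" "y = g x" using g(1) by (auto simp: bij_betw_def)
      have "g ` cls x = Y" using aut_cls[OF g x(1)] x y by simp
      then show "Y \<in> (\<lambda>X. g ` X) ` Q" using cls_Q[OF x(1)] by blast
    qed
  qed
qed

lemma homQ: "homogeneous Q (dmin d)"
  unfolding homogeneous_def
proof (intro allI impI)
  fix F f assume a: "F \<subseteq> Q \<and> finite F \<and> iso_emb F (dmin d) Q (dmin d) f"
  then have FQ: "F \<subseteq> Q" and finF: "finite F" and fiso: "iso_emb F (dmin d) Q (dmin d) f" by auto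
  have fFQ: "f ` F \<subseteq> Q" using fiso by (simp add: iso_emb_def)
  have fQ: "X \<in> F \<Longrightarrow> f X \<in> Q" for X using fFQ by blast
  have fd: "X \<in> F \<Longrightarrow> Y \<in> F \<Longrightarrow> dmin d (f X) (f Y) = dmin d X Y" for X Y
    using fiso by (simp add: iso_emb_def)
  obtain rep1 where r1: "\<forall>X\<in>F. rep1 X \<in> X" "\<forall>X\<in>F. \<forall>Y\<in>F. d (rep1 X) (rep1 Y) = dmin d X Y"
    using K[OF finF FQ] by (elim exE conjE) (rule that)
  obtain rep2 where r2: "\<forall>X\<in>f ` F. rep2 X \<in> X" "\<forall>X\<in>f ` F. \<forall>Y\<in>f ` F. d (rep2 X) (rep2 Y) = dmin d X Y"
    using K[OF finite_imageI[OF finF] fFQ] by (elim exE conjE) (rule that)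
  define h where "h y = rep2 (f (cls y))" for y
  have cr1: "X \<in> F \<Longrightarrow> cls (rep1 X) = X" for X
  proof -
    assume X: "X \<in> F"
    then have "X \<in> Q" "rep1 X \<in> X" using FQ r1(1) by auto
    then show ?thesis using cls_of by blast
  qed
  have h1: "X \<in> F \<Longrightarrow> h (rep1 X) = rep2 (f X)" for X using cr1 h_def by simp
  have r1M: "X \<in> F \<Longrightarrow> rep1 X \<in> M" for X
  proof -
    assume X: "X \<in> F"
    then have "X \<in> Q" "rep1 X \<in> X" using FQ r1(1) by auto
    then show ?thesis using Q_sub by blast
  qed
  have r2M: "X \<in> F \<Longrightarrow> rep2 (f X) \<in> M" for X
  proof -
    assume X: "X \<in> F"
    then have "f X \<in> Q" "rep2 (f X) \<in> f X" using fQ r2(1) by auto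
    then show ?thesis using Q_sub by blast
  qed
  have hiso: "iso_emb (rep1 ` F) d M d h"
    unfolding iso_emb_def
  proof (intro conjI ballI)
    show "h ` rep1 ` F \<subseteq> M" using h1 r2M by auto
  next
    fix x y assume "x \<in> rep1 ` F" "y \<in> rep1 ` F"
    then obtain X Y where XY: "X \<in> F" "Y \<in> F" "x = rep1 X" "y = rep1 Y" by blast
    have "d (h x) (h y) = d (rep2 (f X)) (rep2 (f Y))" using XY h1 by simp
    also have "\<dots> = dmin d (f X) (f Y)" using r2(2) XY by blast
    also have "\<dots> = dmin d X Y" using fd XY by simp
    also have "\<dots> = d x y" using r1(2) XY by simp
    finally show "d (h x) (h y) = d x y" .
  qed
  obtain g where g: "bij_betw g M M" "iso_emb M d M d g" "\<forall>x\<in>rep1 ` F. g x = h x"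
  proof -
    have "rep1 ` F \<subseteq> M" using r1M by blast
    moreover have "finite (rep1 ` F)" using finF by simp
    ultimately show ?thesis using hom_ext[OF _ _ hiso] that by blast
  qed
  show "\<exists>G. bij_betw G Q Q \<and> iso_emb Q (dmin d) Q (dmin d) G \<and> (\<forall>x\<in>F. G x = f x)"
  proof (intro exI[of _ "\<lambda>X. g ` X"] conjI ballI)
    show "bij_betw (\<lambda>X. g ` X) Q Q" by (rule aut_bij[OF g(1,2)])
    show "iso_emb Q (dmin d) Q (dmin d) (\<lambda>X. g ` X)"
      unfolding iso_emb_def
    proof (intro conjI ballI)
      show "(\<lambda>X. g ` X) ` Q \<subseteq> Q" using aut_Q[OF g(1,2)] by blast
    next
      fix X Y assume "X \<in> Q" "Y \<in> Q"
      then show "dmin d (g ` X) (g ` Y) = dmin d X Y" using aut_dmin[OF g(2) Q_sub Q_sub] by blast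
    qed
  next
    fix X assume X: "X \<in> F"
    have "g ` X = g ` cls (rep1 X)" using cr1[OF X] by simp
    also have "\<dots> = cls (g (rep1 X))" using aut_cls[OF g(1,2) r1M[OF X]] .
    also have "\<dots> = cls (rep2 (f X))" using g(3) h1 X by simp
    also have "\<dots> = f X" using cls_of fQ X r2(1) by blast
    finally show "g ` X = f X" .
  qed
qed

lemma L: assumes x: "x \<in> M" and y: "y \<in> M" and dq: "d x y \<in> dist_set Q (dmin d)"
  shows "dmin d (cls x) (cls y) = d x y"
proof -
  obtain A B where AB: "A \<in> Q" "B \<in> Q" "d x y = dmin d A B" using dq by (auto simp: dist_set_def)
  obtain a b where ab: "a \<in> A" "b \<in> B" "d a b = dmin d A B" using dmin_ex[OF AB(1,2)] by blast
  have aM: "a \<in> M" and bM: "b \<in> M" using ab AB Q_sub by auto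
  define f0 where "f0 z = (if z = a then x else y)" for z
  have iso0: "iso_emb {a, b} d M d f0"
    unfolding iso_emb_def
  proof (intro conjI ballI)
    show "f0 ` {a, b} \<subseteq> M" using x y by (auto simp: f0_def)
  next
    fix u v assume uv: "u \<in> {a, b}" "v \<in> {a, b}"
    have dxy: "d x y = d a b" using AB ab by simp
    show "d (f0 u) (f0 v) = d u v"
    proof (cases "a = b")
      case True
      then have "d x y = 0" using dxy d_self[OF aM] by simp
      then have "x = y" using d_eq0[OF x y] by simp
      then show ?thesis using True uv d_self[OF y] d_self[OF bM] by (auto simp: f0_def)
    next
      case False
      then show ?thesis using uv dxy d_self x y aM bM d_sym[OF x y] d_sym[OF aM bM] by (auto simp: f0_def)
    qed
  qed
  obtain g where g: "bij_betw g M M" "iso_emb M d M d g" "\<forall>z\<in>{a,b}. g z = f0 z"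
    using hom_ext[OF _ _ iso0] aM bM by auto
  have ga: "g a = x" using g(3) f0_def by simp
  have gb: "g b = y"
  proof (cases "a = b")
    case True
    then have "d x y = 0" using AB ab d_self[OF aM] by simp
    then have "x = y" using d_eq0[OF x y] by simp
    then show ?thesis using True ga by simp
  next
    case False then show ?thesis using g(3) f0_def by simp
  qed
  have "cls x = g ` A" using aut_cls[OF g(1,2) aM] ga cls_of[OF AB(1) ab(1)] by simp
  moreover have "cls y = g ` B" using aut_cls[OF g(1,2) bM] gb cls_of[OF AB(2) ab(2)] by simp
  ultimately have "dmin d (cls x) (cls y) = dmin d A B" using aut_dmin[OF g(2)] Q_sub AB by simp
  then show ?thesis using AB by simp
qed

lemma DQ_sub: "dist_set Q (dmin d) \<subseteq> D"
  using dmin_D by (auto simp: dist_set_def)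

lemma embQ: "embeds_all_finite (dist_set Q (dmin d)) Q (dmin d)"
  unfolding embeds_all_finite_def
proof (intro allI impI)
  fix F :: "nat set" and dF
  assume a: "finite F \<and> metric_on F dF \<and> dist_set F dF \<subseteq> dist_set Q (dmin d)"
  then obtain \<phi> where phi: "iso_emb F dF M d \<phi>" using emb DQ_sub unfolding embeds_all_finite_def by blast
  show "\<exists>f. iso_emb F dF Q (dmin d) f"
  proof (intro exI[of _ "\<lambda>i. cls (\<phi> i)"])
    show "iso_emb F dF Q (dmin d) (\<lambda>i. cls (\<phi> i))"
      unfolding iso_emb_def
    proof (intro conjI ballI)
      show "(\<lambda>i. cls (\<phi> i)) ` F \<subseteq> Q" using phi cls_Q by (auto simp: iso_emb_def)
    next
      fix i j assume ij: "i \<in> F" "j \<in> F"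
      have M2: "\<phi> i \<in> M" "\<phi> j \<in> M" using phi ij by (auto simp: iso_emb_def)
      have e: "d (\<phi> i) (\<phi> j) = dF i j" using phi ij by (auto simp: iso_emb_def)
      have "dF i j \<in> dist_set F dF" using ij by (auto simp: dist_set_def)
      then have "d (\<phi> i) (\<phi> j) \<in> dist_set Q (dmin d)" using a e by auto
      then show "dmin d (cls (\<phi> i)) (cls (\<phi> j)) = dF i j" using L[OF M2] e by simp
    qed
  qed
qed

lemma inUQ: "in_U (dist_set Q (dmin d)) Q (dmin d)"
  unfolding in_U_def using cntQ metQ homQ embQ by simp

end



definition PI :: "'a set \<Rightarrow> 'a set \<Rightarrow> ('a \<Rightarrow> 'a \<Rightarrow> real) \<Rightarrow> ('a \<times> 'a) set \<Rightarrow> bool" where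
  "PI A B d P \<longleftrightarrow> finite P \<and> P \<subseteq> A \<times> B \<and> (\<forall>(x,y)\<in>P. \<forall>(x',y')\<in>P. d x x' = d y y')"

lemma PI_d: "PI A B d P \<Longrightarrow> (x, y) \<in> P \<Longrightarrow> (x', y') \<in> P \<Longrightarrow> d x x' = d y y'"
  unfolding PI_def by fastforce

lemma PI_swap: assumes P: "PI A B d P" shows "PI B A d (prod.swap ` P)"
proof -
  have "finite (prod.swap ` P)" "prod.swap ` P \<subseteq> B \<times> A" using P by (auto simp: PI_def)
  moreover have "\<forall>u\<in>prod.swap ` P. \<forall>v\<in>prod.swap ` P. d (fst u) (fst v) = d (snd u) (snd v)"
  proof (intro ballI)
    fix u v assume "u \<in> prod.swap ` P" "v \<in> prod.swap ` P"
    then obtain a b a' b' where uv: "u = (b, a)" "v = (b', a')" "(a, b) \<in> P" "(a', b') \<in> P" by auto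
    have "d a a' = d b b'" using PI_d[OF P uv(3,4)] .
    then show "d (fst u) (fst v) = d (snd u) (snd v)" using uv by simp
  qed
  then have "\<forall>(x,y)\<in>prod.swap ` P. \<forall>(x',y')\<in>prod.swap ` P. d x x' = d y y'"
    by (simp add: case_prod_beta)
  ultimately show ?thesis unfolding PI_def by blast
qed

lemma forth:
  assumes mA: "metric_on A d" and mB: "metric_on B d" and dA: "dist_set A d \<subseteq> D"
    and eB: "EPs D B d" and P: "PI A B d P" and a: "a \<in> A"
  shows "\<exists>b. PI A B d (insert (a, b) P)"
proof (cases "a \<in> fst ` P")
  case True
  then obtain b where "(a, b) \<in> P" by force
  then have "insert (a, b) P = P" by blast
  then have "PI A B d (insert (a, b) P)" using P by simp
  then show ?thesis by blast
next
  case False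
  have finP: "finite P" and PAB: "P \<subseteq> A \<times> B" and Pd: "\<forall>(x,y)\<in>P. \<forall>(x',y')\<in>P. d x x' = d y y'"
    using P by (auto simp: PI_def)
  have dAe: "x \<in> A \<Longrightarrow> y \<in> A \<Longrightarrow> d x y = 0 \<longleftrightarrow> x = y" for x y using mA by (simp add: metric_on_def)
  have dAs: "x \<in> A \<Longrightarrow> y \<in> A \<Longrightarrow> d x y = d y x" for x y using mA by (simp add: metric_on_def)
  have dAt: "x \<in> A \<Longrightarrow> y \<in> A \<Longrightarrow> z \<in> A \<Longrightarrow> d x z \<le> d x y + d y z" for x y z
    using mA by (simp add: metric_on_def)
  have dBs: "x \<in> B \<Longrightarrow> y \<in> B \<Longrightarrow> d x y = d y x" for x y using mB by (simp add: metric_on_def)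
  have dAn: "x \<in> A \<Longrightarrow> y \<in> A \<Longrightarrow> d x y \<ge> 0" for x y using mA by (simp add: metric_on_def)
  have dBself: "y \<in> B \<Longrightarrow> d y y = 0" for y using mB by (simp add: metric_on_def)
  have dAself: "y \<in> A \<Longrightarrow> d y y = 0" for y using mA by (simp add: metric_on_def)
  define inv where "inv y = (SOME x. (x, y) \<in> P)" for y
  have inv: "(x, y) \<in> P \<Longrightarrow> inv y = x" for x y
  proof -
    assume xy: "(x, y) \<in> P"
    then have "(inv y, y) \<in> P" unfolding inv_def by (rule someI)
    then have "d x (inv y) = d y y" using Pd xy by fastforce
    moreover have "x \<in> A" "inv y \<in> A" "y \<in> B" using PAB xy \<open>(inv y, y) \<in> P\<close> by auto
    ultimately have "d x (inv y) = 0" using dBself by simp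
    then show ?thesis using dAe \<open>x \<in> A\<close> \<open>inv y \<in> A\<close> by simp
  qed
  define F where "F = snd ` P"
  define t where "t y = d a (inv y)" for y
  have "\<exists>p\<in>B. p \<notin> F \<and> (\<forall>x\<in>F. d p x = t x)"
  proof (rule eB[unfolded EPs_def, rule_format], intro conjI)
    show "finite F" using finP by (simp add: F_def)
    show "F \<subseteq> B" using PAB by (auto simp: F_def)
    show "\<forall>x\<in>F. t x \<in> D \<and> 0 < t x"
    proof
      fix y assume "y \<in> F"
      then obtain x where xy: "(x, y) \<in> P" by (auto simp: F_def)
      then have tx: "t y = d a x" using inv t_def by simp
      have xA: "x \<in> A" using xy PAB by auto
      have "a \<noteq> x" using False xy by force
      then have "d a x \<noteq> 0" using dAe a xA by simp
      moreover have "d a x \<in> D" using dA a xA by (auto simp: dist_set_def)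
      ultimately show "t y \<in> D \<and> 0 < t y" using tx dAn[OF a xA] by simp
    qed
    show "\<forall>x\<in>F. \<forall>y\<in>F. \<bar>t x - t y\<bar> \<le> d x y \<and> d x y \<le> t x + t y"
    proof (intro ballI)
      fix y y' assume "y \<in> F" "y' \<in> F"
      then obtain x x' where xy: "(x, y) \<in> P" "(x', y') \<in> P" by (auto simp: F_def)
      have tx: "t y = d a x" "t y' = d a x'" using inv t_def xy by auto
      have A3: "x \<in> A" "x' \<in> A" using xy PAB by auto
      have e: "d y y' = d x x'" using Pd xy by fastforce
      have t1: "d a x' \<le> d a x + d x x'" using dAt[OF a A3] .
      have t2: "d a x \<le> d a x' + d x' x" using dAt[OF a A3(2,1)] .
      have t3: "d x x' \<le> d x a + d a x'" using dAt[OF A3(1) a A3(2)] .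
      show "\<bar>t y - t y'\<bar> \<le> d y y' \<and> d y y' \<le> t y + t y'"
        using tx e t1 t2 t3 dAs[OF A3] dAs[OF A3(1) a] by (simp add: abs_le_iff)
    qed
  qed
  then obtain b where b: "b \<in> B" "b \<notin> F" "\<forall>y\<in>F. d b y = t y" by blast
  have "PI A B d (insert (a, b) P)"
    unfolding PI_def
  proof (intro conjI)
    show "finite (insert (a, b) P)" using finP by simp
    show "insert (a, b) P \<subseteq> A \<times> B" using PAB a b by auto
    have new: "(x, y) \<in> P \<Longrightarrow> d a x = d b y" for x y
    proof -
      assume xy: "(x, y) \<in> P"
      then have "y \<in> F" by (force simp: F_def)
      then show ?thesis using b(3) t_def inv[OF xy] by simp
    qed
    show "\<forall>(x, y)\<in>insert (a, b) P. \<forall>(x', y')\<in>insert (a, b) P. d x x' = d y y'"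
    proof (intro ballI, clarify)
      fix x y x' y' assume xy: "(x, y) \<in> insert (a, b) P" and xy': "(x', y') \<in> insert (a, b) P"
      have sym1: "(x, y) \<in> P \<Longrightarrow> d x a = d y b" for x y
      proof -
        assume "(x, y) \<in> P"
        moreover then have "x \<in> A" "y \<in> B" using PAB by auto
        ultimately show ?thesis using new[of x y] dAs[of x a] dBs[of y b] a b(1) by simp
      qed
      show "d x x' = d y y'"
      proof (cases "(x, y) = (a, b)")
        case True
        show ?thesis
        proof (cases "(x', y') = (a, b)")
          case True2: True
          then show ?thesis using True dAself[OF a] dBself[OF b(1)] by simp
        next
          case False
          then have "(x', y') \<in> P" using xy' by auto
          then show ?thesis using True new by simp
        qed
      next
        case False
        then have P1: "(x, y) \<in> P" using xy by auto
        show ?thesis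
        proof (cases "(x', y') = (a, b)")
          case True
          then show ?thesis using sym1[OF P1] by simp
        next
          case False
          then have "(x', y') \<in> P" using xy' by auto
          then show ?thesis using PI_d[OF P P1] by simp
        qed
      qed
    qed
  qed
  then show ?thesis by blast
qed

primrec bfseq :: "'a set \<Rightarrow> 'a set \<Rightarrow> ('a \<Rightarrow> 'a \<Rightarrow> real) \<Rightarrow> nat \<Rightarrow> ('a \<times> 'a) set" where
  "bfseq A B d 0 = {}"
| "bfseq A B d (Suc n) = (let P1 = (SOME P'. \<exists>b. P' = insert (from_nat_into A n, b) (bfseq A B d n) \<and> PI A B d P')
     in (SOME P''. \<exists>a. P'' = insert (a, from_nat_into B n) P1 \<and> PI A B d P''))"

lemma back_forth:
  fixes A B :: "'a set" and d
  assumes cA: "countable A" and cB: "countable B" and neA: "A \<noteq> {}" and neB: "B \<noteq> {}"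
    and mA: "metric_on A d" and mB: "metric_on B d"
    and dA: "dist_set A d \<subseteq> D" and dB: "dist_set B d \<subseteq> D"
    and eA: "EPs D A d" and eB: "EPs D B d"
  shows "\<exists>g. iso_emb A d B d g \<and> g ` A = B"
proof -
  let ?s = "bfseq A B d"
  have fa: "from_nat_into A n \<in> A" for n using neA by (rule from_nat_into)
  have fb: "from_nat_into B n \<in> B" for n using neB by (rule from_nat_into)
  have bk: "PI A B d P \<Longrightarrow> b \<in> B \<Longrightarrow> \<exists>a. PI A B d (insert (a, b) P)" for P b
  proof -
    assume P: "PI A B d P" and b: "b \<in> B"
    obtain a where "PI B A d (insert (b, a) (prod.swap ` P))"
      using forth[OF mB mA dB eA PI_swap[OF P] b] by blast
    then have "PI A B d (prod.swap ` insert (b, a) (prod.swap ` P))" by (rule PI_swap)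
    moreover have "prod.swap ` insert (b, a) (prod.swap ` P) = insert (a, b) P"
      by (auto simp: image_image)
    ultimately show ?thesis by auto
  qed
  have ext: "PI A B d P \<Longrightarrow> PI A B d P2 \<and> P \<subseteq> P2 \<and> (\<exists>b. (from_nat_into A n, b) \<in> P2) \<and> (\<exists>a. (a, from_nat_into B n) \<in> P2)"
    if P2: "P2 = (SOME P''. \<exists>a. P'' = insert (a, from_nat_into B n) (SOME P'. \<exists>b. P' = insert (from_nat_into A n, b) P \<and> PI A B d P') \<and> PI A B d P'')"
    for P P2 n
  proof -
    assume P: "PI A B d P"
    define P1 where "P1 = (SOME P'. \<exists>b. P' = insert (from_nat_into A n, b) P \<and> PI A B d P')"
    have "\<exists>P'. \<exists>b. P' = insert (from_nat_into A n, b) P \<and> PI A B d P'"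
      using forth[OF mA mB dA eB P fa] by blast
    then have P1: "\<exists>b. P1 = insert (from_nat_into A n, b) P \<and> PI A B d P1"
      unfolding P1_def by (rule someI_ex)
    then have P1': "PI A B d P1" by blast
    have "\<exists>P''. \<exists>a. P'' = insert (a, from_nat_into B n) P1 \<and> PI A B d P''"
      using bk[OF P1' fb] by blast
    then have P2': "\<exists>a. P2 = insert (a, from_nat_into B n) P1 \<and> PI A B d P2"
      unfolding P2 P1_def[symmetric] by (rule someI_ex)
    show ?thesis using P1 P2' by blast
  qed
  have sSuc: "?s (Suc n) = (SOME P''. \<exists>a. P'' = insert (a, from_nat_into B n) (SOME P'. \<exists>b. P' = insert (from_nat_into A n, b) (?s n) \<and> PI A B d P') \<and> PI A B d P'')" for n
    by (simp only: bfseq.simps Let_def)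
  have PIs: "PI A B d (?s n)" for n
  proof (induction n)
    case 0 then show ?case by (simp add: PI_def)
  next
    case (Suc n) then show ?case using ext[OF sSuc] by blast
  qed
  have step: "?s n \<subseteq> ?s (Suc n) \<and> (\<exists>b. (from_nat_into A n, b) \<in> ?s (Suc n)) \<and> (\<exists>a. (a, from_nat_into B n) \<in> ?s (Suc n))" for n
    using ext[OF sSuc PIs] by blast
  have mono: "i \<le> j \<Longrightarrow> ?s i \<subseteq> ?s j" for i j
    by (rule lift_Suc_mono_le[of ?s]) (use step in blast)+
  define U where "U = (\<Union>n. ?s n)"
  have UAB: "U \<subseteq> A \<times> B"
  proof
    fix u assume "u \<in> U"
    then obtain n where "u \<in> ?s n" unfolding U_def by blast
    moreover have "?s n \<subseteq> A \<times> B" using PIs[of n] by (simp add: PI_def)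
    ultimately show "u \<in> A \<times> B" by blast
  qed
  have Ud: "(x, y) \<in> U \<Longrightarrow> (x', y') \<in> U \<Longrightarrow> d x x' = d y y'" for x y x' y'
  proof -
    assume "(x, y) \<in> U" "(x', y') \<in> U"
    then obtain i j where ij: "(x, y) \<in> ?s i" "(x', y') \<in> ?s j" unfolding U_def by blast
    have "(x, y) \<in> ?s (max i j)" using mono[of i "max i j"] ij(1) by auto
    moreover have "(x', y') \<in> ?s (max i j)" using mono[of j "max i j"] ij(2) by auto
    ultimately show ?thesis using PI_d[OF PIs] by blast
  qed
  have Uall: "a \<in> A \<Longrightarrow> \<exists>b. (a, b) \<in> U" for a
  proof -
    assume "a \<in> A"
    then obtain n where "a = from_nat_into A n" using from_nat_into_surj[OF cA] by blast
    then show ?thesis using step[of n] unfolding U_def by blast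
  qed
  have Uallb: "b \<in> B \<Longrightarrow> \<exists>a. (a, b) \<in> U" for b
  proof -
    assume "b \<in> B"
    then obtain n where "b = from_nat_into B n" using from_nat_into_surj[OF cB] by blast
    then show ?thesis using step[of n] unfolding U_def by blast
  qed
  define g where "g a = (SOME b. (a, b) \<in> U)" for a
  have gU: "a \<in> A \<Longrightarrow> (a, g a) \<in> U" for a unfolding g_def using Uall by (rule someI_ex)
  have dBe: "x \<in> B \<Longrightarrow> y \<in> B \<Longrightarrow> d x y = 0 \<longleftrightarrow> x = y" for x y using mB by (simp add: metric_on_def)
  have dAself: "y \<in> A \<Longrightarrow> d y y = 0" for y using mA by (simp add: metric_on_def)
  show ?thesis
  proof (intro exI[of _ g] conjI)
    show "iso_emb A d B d g"
      unfolding iso_emb_def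
    proof (intro conjI ballI)
      show "g ` A \<subseteq> B" using gU UAB by blast
    next
      fix x y assume "x \<in> A" "y \<in> A"
      then show "d (g x) (g y) = d x y" using Ud[OF gU gU] by simp
    qed
    show "g ` A = B"
    proof
      show "g ` A \<subseteq> B" using gU UAB by blast
      show "B \<subseteq> g ` A"
      proof
        fix b assume b: "b \<in> B"
        then obtain a where ab: "(a, b) \<in> U" using Uallb by blast
        then have aA: "a \<in> A" using UAB by auto
        have "d b (g a) = d a a" using Ud[OF ab gU[OF aA]] by simp
        then have "d b (g a) = 0" using dAself[OF aA] by simp
        moreover have "g a \<in> B" using gU[OF aA] UAB by auto
        ultimately have "b = g a" using dBe b by blast
        then show "b \<in> g ` A" using aA by blast
      qed
    qed
  qed
qed




lemma metric_on_subset: "metric_on M d \<Longrightarrow> S \<subseteq> M \<Longrightarrow> metric_on S d"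
  unfolding metric_on_def by blast

lemma dist_set_mono: "S \<subseteq> M \<Longrightarrow> dist_set S d \<subseteq> dist_set M d"
  unfolding dist_set_def by blast

context QL
begin

lemma EP_S:
  assumes fiso: "iso_emb Q (dmin d) Q (dmin d) f"
  shows "EPs D (\<Union>(f ` Q)) d"
  unfolding EPs_def
proof (intro allI impI)
  fix F t
  assume a: "finite F \<and> F \<subseteq> \<Union>(f ` Q) \<and> (\<forall>x\<in>F. t x \<in> D \<and> 0 < t x) \<and>
      (\<forall>x\<in>F. \<forall>y\<in>F. \<bar>t x - t y\<bar> \<le> d x y \<and> d x y \<le> t x + t y)"
  then have finF: "finite F" and FS: "F \<subseteq> \<Union>(f ` Q)" and tD: "\<forall>x\<in>F. t x \<in> D \<and> 0 < t x"
    and cons: "\<forall>x\<in>F. \<forall>y\<in>F. \<bar>t x - t y\<bar> \<le> d x y \<and> d x y \<le> t x + t y" by auto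
  define N where "N = f ` Q"
  have NQ: "N \<subseteq> Q" using fiso by (simp add: iso_emb_def N_def)
  have fd: "X \<in> Q \<Longrightarrow> Y \<in> Q \<Longrightarrow> dmin d (f X) (f Y) = dmin d X Y" for X Y
    using fiso by (simp add: iso_emb_def)
  have SM: "\<Union>N \<subseteq> M" using NQ Q_sub by blast
  have FM: "F \<subseteq> M" using FS SM N_def by blast
  obtain p where p: "p \<in> M" "p \<notin> F" "\<forall>x\<in>F. d p x = t x" using EP[OF finF FM tD cons] by blast
  define P where "P = cls p"
  have PQ: "P \<in> Q" using cls_Q[OF p(1)] P_def by simp
  have pP: "p \<in> P" using self_cls[OF p(1)] P_def by simp
  show "\<exists>q\<in>\<Union>(f ` Q). q \<notin> F \<and> (\<forall>x\<in>F. d q x = t x)"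
  proof (cases "P \<in> N")
    case True
    then have "p \<in> \<Union>(f ` Q)" using pP N_def by blast
    then show ?thesis using p by blast
  next
    case False
    have clsF: "x \<in> F \<Longrightarrow> cls x \<in> N" for x
    proof -
      assume "x \<in> F"
      then obtain Y where Y: "Y \<in> Q" "x \<in> f Y" using FS by blast
      have "f Y \<in> Q" using Y(1) NQ N_def by blast
      then have "cls x = f Y" using cls_of Y(2) by blast
      then show ?thesis using Y(1) N_def by simp
    qed
    have injf: "inj_on f Q"
    proof (rule inj_onI)
      fix X Y assume XY: "X \<in> Q" "Y \<in> Q" "f X = f Y"
      have fXQ: "f X \<in> Q" using XY NQ N_def by blast
      have "dmin d X Y = 0" using fd[OF XY(1,2)] XY(3) dmin_self[OF fXQ] by simp
      then show "X = Y" using dmin_0[OF XY(1,2)] by simp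
    qed
    define \<phi> where "\<phi> = inv_into Q f"
    have phiQ: "C \<in> N \<Longrightarrow> \<phi> C \<in> Q" for C using N_def \<phi>_def by (simp add: inv_into_into)
    have fphi: "C \<in> N \<Longrightarrow> f (\<phi> C) = C" for C using N_def \<phi>_def by (simp add: f_inv_into_f)
    define C where "C = cls ` F"
    have CN: "C \<subseteq> N" using clsF C_def by blast
    have CQ: "C \<subseteq> Q" using CN NQ by blast
    have isophi: "iso_emb C (dmin d) Q (dmin d) \<phi>"
      unfolding iso_emb_def
    proof (intro conjI ballI)
      show "\<phi> ` C \<subseteq> Q" using phiQ CN by blast
    next
      fix C1 C2 assume c: "C1 \<in> C" "C2 \<in> C"
      then have "C1 \<in> N" "C2 \<in> N" using CN by auto
      then show "dmin d (\<phi> C1) (\<phi> C2) = dmin d C1 C2"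
        using fd[OF phiQ phiQ] fphi by metis
    qed
    have finC: "finite C" using finF C_def by simp
    obtain H where H: "bij_betw H Q Q" "iso_emb Q (dmin d) Q (dmin d) H" "\<forall>X\<in>C. H X = \<phi> X"
    proof -
      have "C \<subseteq> Q \<and> finite C \<and> iso_emb C (dmin d) Q (dmin d) \<phi>" using CQ finC isophi by simp
      then show ?thesis using homQ[unfolded homogeneous_def, rule_format, of C \<phi>] that by blast
    qed
    have HPQ: "H P \<in> Q" using H(1) PQ by (auto simp: bij_betw_def)
    define W where "W = f (H P)"
    have WN: "W \<in> N" using HPQ W_def N_def by simp
    have WQ: "W \<in> Q" using WN NQ by blast
    have key: "x \<in> F \<Longrightarrow> dmin d W (cls x) = dmin d P (cls x)" for x
    proof -
      assume x: "x \<in> F"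
      have cx: "cls x \<in> C" "cls x \<in> N" "cls x \<in> Q" using x C_def clsF NQ by auto
      have "dmin d W (cls x) = dmin d (f (H P)) (f (\<phi> (cls x)))" using fphi[OF cx(2)] W_def by simp
      also have "\<dots> = dmin d (H P) (\<phi> (cls x))" using fd[OF HPQ phiQ[OF cx(2)]] .
      also have "\<dots> = dmin d (H P) (H (cls x))" using H(3) cx(1) by simp
      also have "\<dots> = dmin d P (cls x)" using H(2) PQ cx(3) by (simp add: iso_emb_def)
      finally show ?thesis .
    qed
    have big: "x \<in> F \<Longrightarrow> dmin d P (cls x) > m" for x
    proof -
      assume x: "x \<in> F"
      have "cls x \<in> N" using clsF x by simp
      then have "P \<noteq> cls x" using False by auto
      then show ?thesis using dmin_big PQ clsF x NQ by blast
    qed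
    obtain w where wW: "w \<in> W" using Q_ne[OF WQ] by blast
    have wM: "w \<in> M" using wW WQ Q_sub by blast
    have wF: "w \<notin> F"
    proof
      assume wF: "w \<in> F"
      have "cls w = W" using cls_of[OF WQ wW] .
      then have "dmin d W (cls w) = 0" using dmin_self[OF WQ] by simp
      then show False using key[OF wF] big[OF wF] mpos by simp
    qed
    define F' where "F' = insert w F"
    define t' where "t' = t(w := m)"
    have bnds: "x \<in> F \<Longrightarrow> dmin d P (cls x) \<le> t x \<and> t x \<le> dmin d P (cls x) + m \<and>
        dmin d P (cls x) \<le> d w x \<and> d w x \<le> dmin d P (cls x) + m" for x
    proof -
      assume x: "x \<in> F"
      have xM: "x \<in> M" using x FM by blast
      have cxQ: "cls x \<in> Q" using cls_Q[OF xM] .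
      have xc: "x \<in> cls x" using self_cls[OF xM] .
      have "dmin d P (cls x) \<le> d p x" using dmin_le[OF PQ cxQ pP xc] .
      moreover have "d p x \<le> dmin d P (cls x) + m" using Bnd[OF PQ cxQ pP xc] .
      moreover have "dmin d W (cls x) \<le> d w x" using dmin_le[OF WQ cxQ wW xc] .
      moreover have "d w x \<le> dmin d W (cls x) + m" using Bnd[OF WQ cxQ wW xc] .
      ultimately show ?thesis using p(3) x key[OF x] by simp
    qed
    have "\<exists>q\<in>M. q \<notin> F' \<and> (\<forall>x\<in>F'. d q x = t' x)"
    proof (rule EP)
      show "finite F'" using finF F'_def by simp
      show "F' \<subseteq> M" using FM wM F'_def by simp
      show "\<forall>x\<in>F'. t' x \<in> D \<and> 0 < t' x" using tD mD mpos wF by (auto simp: F'_def t'_def)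
      show "\<forall>x\<in>F'. \<forall>y\<in>F'. \<bar>t' x - t' y\<bar> \<le> d x y \<and> d x y \<le> t' x + t' y"
      proof (intro ballI)
        fix x y assume x: "x \<in> F'" and y: "y \<in> F'"
        have wx: "z \<in> F \<Longrightarrow> \<bar>m - t z\<bar> \<le> d w z \<and> d w z \<le> m + t z" for z
          using bnds[of z] big[of z] by (simp add: abs_le_iff)
        have sym: "z \<in> F \<Longrightarrow> d z w = d w z" for z using d_sym wM FM by blast
        show "\<bar>t' x - t' y\<bar> \<le> d x y \<and> d x y \<le> t' x + t' y"
        proof (cases "x = w")
          case True note xw = True
          show ?thesis
          proof (cases "y = w")
            case True then show ?thesis using xw d_self[OF wM] mpos by (simp add: t'_def)
          next
            case False then have "y \<in> F" using y F'_def by simp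
            then show ?thesis using xw False wx[of y] by (simp add: t'_def)
          qed
        next
          case False note xw = False
          then have xF: "x \<in> F" using x F'_def by simp
          show ?thesis
          proof (cases "y = w")
            case True then show ?thesis using xw xF wx[of x] sym[of x]
              by (simp add: t'_def abs_minus_commute add.commute)
          next
            case False then have "y \<in> F" using y F'_def by simp
            then show ?thesis using xw False xF cons by (simp add: t'_def)
          qed
        qed
      qed
    qed
    then obtain q where q: "q \<in> M" "q \<notin> F'" "\<forall>x\<in>F'. d q x = t' x" by blast
    have "d q w = m" using q(3) F'_def t'_def by simp
    then have "q \<in> cls w" using mem_cls[OF wM] q(1) d_sym[OF wM q(1)] by simp
    then have "q \<in> W" using cls_of[OF WQ wW] by simp
    then have "q \<in> \<Union>(f ` Q)" using WN N_def by blast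
    moreover have "q \<notin> F" using q(2) F'_def by simp
    moreover have "\<forall>x\<in>F. d q x = t x" using q(3) F'_def t'_def wF by auto
    ultimately show ?thesis by blast
  qed
qed

lemma part3: "\<forall>N. (\<exists>f. iso_emb Q (dmin d) Q (dmin d) f \<and> N = f ` Q) \<longrightarrow> (\<exists>g. iso_emb M d M d g \<and> g ` M = \<Union>N)"
proof (intro allI impI)
  fix N assume "\<exists>f. iso_emb Q (dmin d) Q (dmin d) f \<and> N = f ` Q"
  then obtain f where f: "iso_emb Q (dmin d) Q (dmin d) f" "N = f ` Q" by blast
  define S where "S = \<Union>(f ` Q)"
  have NQ: "f ` Q \<subseteq> Q" using f(1) by (simp add: iso_emb_def)
  have SM: "S \<subseteq> M" using NQ Q_sub S_def by blast
  have eS: "EPs D S d" using EP_S[OF f(1)] S_def by simp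
  have Sne: "S \<noteq> {}"
  proof -
    have "\<exists>p\<in>S. p \<notin> {} \<and> (\<forall>x\<in>{}. d p x = (\<lambda>_. 0) x)"
      using eS[unfolded EPs_def, rule_format, of "{}" "\<lambda>_. 0"] by simp
    then show ?thesis by blast
  qed
  have dM: "dist_set M d \<subseteq> D" using dsD by simp
  have dS: "dist_set S d \<subseteq> D" using dist_set_mono[OF SM, of d] dsD by simp
  have "\<exists>g. iso_emb M d S d g \<and> g ` M = S"
    by (rule back_forth[OF cntM countable_subset[OF SM cntM] M_ne Sne met metric_on_subset[OF met SM]
        dM dS EPs_M eS])
  then obtain g where g: "iso_emb M d S d g" "g ` M = S" by (elim exE conjE)
  have "iso_emb M d M d g" using g SM by (auto simp: iso_emb_def)
  then show "\<exists>g. iso_emb M d M d g \<and> g ` M = \<Union>N" using g(2) S_def f(2) by blast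
qed

end

lemma inU_transfer:
  assumes U: "in_U D A dA" and inj: "inj_on h A"
  shows "in_U D (h ` A) (\<lambda>i j. dA (inv_into A h i) (inv_into A h j))"
proof -
  define ih where "ih = inv_into A h"
  define d' where "d' i j = dA (ih i) (ih j)" for i j
  have ihh: "x \<in> A \<Longrightarrow> ih (h x) = x" for x using inj ih_def by (simp add: inv_into_f_f)
  have ihA: "y \<in> h ` A \<Longrightarrow> ih y \<in> A" for y using ih_def by (simp add: inv_into_into)
  have hih: "y \<in> h ` A \<Longrightarrow> h (ih y) = y" for y using ih_def by (simp add: f_inv_into_f)
  have d'h: "x \<in> A \<Longrightarrow> y \<in> A \<Longrightarrow> d' (h x) (h y) = dA x y" for x y using ihh d'_def by simp
  have cA: "countable A" and mA: "metric_on A dA" and dsA: "dist_set A dA = D"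
    and hA: "homogeneous A dA" and eA: "embeds_all_finite D A dA" using U by (auto simp: in_U_def)
  have c: "countable (h ` A)" using cA by simp
  have m: "metric_on (h ` A) d'"
    unfolding metric_on_def
  proof (intro conjI ballI)
    fix i j assume "i \<in> h ` A" "j \<in> h ` A"
    then obtain x y where xy: "x \<in> A" "y \<in> A" "i = h x" "j = h y" by blast
    show "0 \<le> d' i j" using mA xy d'h by (simp add: metric_on_def)
    have "(dA x y = 0) = (x = y)" using mA xy by (simp add: metric_on_def)
    moreover have "(h x = h y) = (x = y)" using inj xy by (meson inj_on_contraD)
    ultimately show "(d' i j = 0) = (i = j)" using xy d'h by simp
    show "d' i j = d' j i" using mA xy d'h by (simp add: metric_on_def)
  next
    fix i j k assume "i \<in> h ` A" "j \<in> h ` A" "k \<in> h ` A"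
    then obtain x y z where xyz: "x \<in> A" "y \<in> A" "z \<in> A" "i = h x" "j = h y" "k = h z" by blast
    show "d' i k \<le> d' i j + d' j k" using mA xyz d'h by (simp add: metric_on_def)
  qed
  have ds: "dist_set (h ` A) d' = D"
  proof -
    have "dist_set (h ` A) d' = dist_set A dA"
      unfolding dist_set_def
    proof (intro set_eqI iffI)
      fix r assume "r \<in> {d' x y |x y. x \<in> h ` A \<and> y \<in> h ` A}"
      then obtain x y where "x \<in> A" "y \<in> A" "r = d' (h x) (h y)" by blast
      then show "r \<in> {dA x y |x y. x \<in> A \<and> y \<in> A}" using d'h by auto
    next
      fix r assume "r \<in> {dA x y |x y. x \<in> A \<and> y \<in> A}"
      then obtain x y where "x \<in> A" "y \<in> A" "r = dA x y" by blast
      then have "r = d' (h x) (h y)" "h x \<in> h ` A" "h y \<in> h ` A" using d'h by auto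
      then show "r \<in> {d' x y |x y. x \<in> h ` A \<and> y \<in> h ` A}" by blast
    qed
    then show ?thesis using dsA by simp
  qed
  have hom: "homogeneous (h ` A) d'"
    unfolding homogeneous_def
  proof (intro allI impI)
    fix F f assume a: "F \<subseteq> h ` A \<and> finite F \<and> iso_emb F d' (h ` A) d' f"
    then have FA: "F \<subseteq> h ` A" and finF: "finite F" and fi: "iso_emb F d' (h ` A) d' f" by auto
    have fA: "i \<in> F \<Longrightarrow> f i \<in> h ` A" for i using fi by (auto simp: iso_emb_def)
    have fd: "i \<in> F \<Longrightarrow> j \<in> F \<Longrightarrow> d' (f i) (f j) = d' i j" for i j using fi by (simp add: iso_emb_def)
    define F0 where "F0 = ih ` F"
    define f0 where "f0 x = ih (f (h x))" for x
    have iso0: "iso_emb F0 dA A dA f0"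
      unfolding iso_emb_def
    proof (intro conjI ballI)
      show "f0 ` F0 \<subseteq> A"
      proof
        fix z assume "z \<in> f0 ` F0"
        then obtain i where i: "i \<in> F" "z = f0 (ih i)" by (auto simp: F0_def)
        have "h (ih i) = i" using i(1) FA hih by blast
        then have "z = ih (f i)" using i(2) by (simp add: f0_def)
        then show "z \<in> A" using ihA fA i(1) by blast
      qed
    next
      fix x y assume "x \<in> F0" "y \<in> F0"
      then obtain i j where ij: "i \<in> F" "j \<in> F" "x = ih i" "y = ih j" by (auto simp: F0_def)
      have "h x = i" "h y = j" using ij FA hih by auto
      then have "dA (f0 x) (f0 y) = d' (f i) (f j)" by (simp add: f0_def d'_def)
      also have "\<dots> = d' i j" using fd ij by simp
      also have "\<dots> = dA x y" using ij d'_def by simp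
      finally show "dA (f0 x) (f0 y) = dA x y" .
    qed
    have "F0 \<subseteq> A \<and> finite F0 \<and> iso_emb F0 dA A dA f0" using iso0 finF FA ihA by (auto simp: F0_def)
    then obtain g0 where g0: "bij_betw g0 A A" "iso_emb A dA A dA g0" "\<forall>x\<in>F0. g0 x = f0 x"
      using hA[unfolded homogeneous_def, rule_format] by blast
    define g where "g = h \<circ> (g0 \<circ> ih)"
    have bh: "bij_betw h A (h ` A)" using inj by (simp add: inj_on_imp_bij_betw)
    have bih: "bij_betw ih (h ` A) A" using bij_betw_inv_into[OF bh] ih_def by simp
    have bg: "bij_betw g (h ` A) (h ` A)" unfolding g_def
      by (rule bij_betw_trans[OF bij_betw_trans[OF bih g0(1)] bh])
    show "\<exists>g. bij_betw g (h ` A) (h ` A) \<and> iso_emb (h ` A) d' (h ` A) d' g \<and> (\<forall>x\<in>F. g x = f x)"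
    proof (intro exI[of _ g] conjI ballI)
      show "bij_betw g (h ` A) (h ` A)" by (rule bg)
      show "iso_emb (h ` A) d' (h ` A) d' g"
        unfolding iso_emb_def
      proof (intro conjI ballI)
        show "g ` h ` A \<subseteq> h ` A" using bg by (simp add: bij_betw_def)
      next
        fix i j assume ij: "i \<in> h ` A" "j \<in> h ` A"
        have g0A: "g0 (ih i) \<in> A" "g0 (ih j) \<in> A" using g0(1) ihA ij by (auto simp: bij_betw_def)
        have "d' (g i) (g j) = dA (g0 (ih i)) (g0 (ih j))" using d'h g0A by (simp add: g_def)
        also have "\<dots> = dA (ih i) (ih j)" using g0(2) ihA ij by (simp add: iso_emb_def)
        finally show "d' (g i) (g j) = d' i j" by (simp add: d'_def)
      qed
    next
      fix i assume i: "i \<in> F"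
      have "ih i \<in> F0" using i F0_def by simp
      then have "g0 (ih i) = f0 (ih i)" using g0(3) by simp
      also have "\<dots> = ih (f i)" using i FA hih by (simp add: f0_def subset_iff)
      finally show "g i = f i" using hih fA[OF i] by (simp add: g_def)
    qed
  qed
  have emb: "embeds_all_finite D (h ` A) d'"
    unfolding embeds_all_finite_def
  proof (intro allI impI)
    fix F :: "nat set" and dF assume "finite F \<and> metric_on F dF \<and> dist_set F dF \<subseteq> D"
    then obtain f where f: "iso_emb F dF A dA f" using eA unfolding embeds_all_finite_def by blast
    have "iso_emb F dF (h ` A) d' (h \<circ> f)"
      unfolding iso_emb_def
    proof (intro conjI ballI)
      show "(h \<circ> f) ` F \<subseteq> h ` A" using f by (auto simp: iso_emb_def)
    next
      fix i j assume ij: "i \<in> F" "j \<in> F"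
      then have "f i \<in> A" "f j \<in> A" using f by (auto simp: iso_emb_def)
      then have "d' ((h \<circ> f) i) ((h \<circ> f) j) = dA (f i) (f j)" using d'h by simp
      then show "d' ((h \<circ> f) i) ((h \<circ> f) j) = dF i j" using f ij by (simp add: iso_emb_def)
    qed
    then show "\<exists>f. iso_emb F dF (h ` A) d' f" by blast
  qed
  have "d' = (\<lambda>i j. dA (inv_into A h i) (inv_into A h j))" by (intro ext) (simp add: d'_def ih_def)
  then show ?thesis unfolding in_U_def using c m ds hom emb by simp
qed

lemma universal_of_inU:
  fixes A :: "'a set"
  assumes "in_U D A dA"
  shows "universal_dist D"
proof -
  have cA: "countable A" using assms by (simp add: in_U_def)
  have "inj_on (to_nat_on A) A" using cA by (rule inj_on_to_nat_on)
  then have "in_U D (to_nat_on A ` A) (\<lambda>i j. dA (inv_into A (to_nat_on A) i) (inv_into A (to_nat_on A) j))"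
    by (rule inU_transfer[OF assms])
  then show ?thesis unfolding universal_dist_def by blast
qed




context UL
begin

lemma gap_from_block:
  assumes B: "B \<in> blocks D" and b0B: "Min (D - {0}) \<in> B" and Dnn: "\<forall>r\<in>D. r \<ge> 0"
  shows "\<forall>s\<in>D. Max B < s \<longrightarrow> 2 * Max B < s"
proof (intro ballI impI, rule ccontr)
  fix s assume sD: "s \<in> D" and ms: "Max B < s" and ns: "\<not> 2 * Max B < s"
  have pb: "pre_block D B" and maxi: "\<And>B'. pre_block D B' \<Longrightarrow> B \<subseteq> B' \<Longrightarrow> B' = B"
    using B by (auto simp: blocks_def)
  have Bne: "B \<noteq> {}" and BD: "B \<subseteq> D - {0}"
    and pred: "Min B > 2 * predD D (Min B)"
    and succ: "\<And>b. b \<in> B \<Longrightarrow> b < Max B \<Longrightarrow> succD D b \<in> B \<and> b + Min B \<ge> succD D b"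
    using pb by (auto simp: pre_block_def)
  have finB: "finite B" using BD finD finite_subset by blast
  define b0 where "b0 = Min (D - {0})"
  have finD0: "finite (D - {0})" using finD by simp
  have minB: "Min B = b0"
  proof (rule antisym)
    show "Min B \<le> b0" using b0B finB b0_def by simp
    have "Min B \<in> D - {0}" using Min_in[OF finB Bne] BD by blast
    then show "b0 \<le> Min B" using finD0 b0_def by simp
  qed
  have b0le: "b \<in> B \<Longrightarrow> b0 \<le> b" for b using minB finB by (metis Min_le)
  have Bpos: "b \<in> B \<Longrightarrow> b > 0" for b using BD Dnn by force
  define m where "m = Max B"
  have mB: "m \<in> B" using Max_in[OF finB Bne] m_def by simp
  have leM: "b \<in> B \<Longrightarrow> b \<le> m" for b using finB m_def by simp
  have b0pos: "b0 > 0" using Bpos b0B b0_def by simp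
  have mD: "m \<in> D" using mB BD by blast
  define Sm where "Sm = {u \<in> D. u > m}"
  have finSm: "finite Sm" using finD Sm_def by simp
  have Smne: "Sm \<noteq> {}" using sD ms m_def Sm_def by auto
  define r where "r = succD D m"
  have r: "r = Min Sm" using r_def Sm_def by (simp add: succD_def)
  have rSm: "r \<in> Sm" using Min_in[OF finSm Smne] r by simp
  have rD: "r \<in> D" and rm: "r > m" using rSm Sm_def by auto
  have rmin: "u \<in> D \<Longrightarrow> u > m \<Longrightarrow> r \<le> u" for u using r finSm Sm_def by simp
  have r2m: "r \<le> 2 * m" using rmin[OF sD] ms ns m_def by simp
  text \<open>Step 1: maximality gives r > m + b0\<close>
  have step1: "r > m + b0"
  proof (rule ccontr)
    assume "\<not> r > m + b0"
    then have rle: "r \<le> m + b0" by simp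
    define B' where "B' = insert r B"
    have finB': "finite B'" using finB B'_def by simp
    have minB': "Min B' = Min B"
    proof -
      have "Min B' = min r (Min B)" using B'_def finB Bne by simp
      moreover have "Min B \<le> r" using minB b0le[OF mB] rm by simp
      ultimately show ?thesis by simp
    qed
    have maxB': "Max B' = r"
    proof -
      have "Max B' = max r (Max B)" using B'_def finB Bne by simp
      then show ?thesis using rm m_def by simp
    qed
    have "pre_block D B'"
      unfolding pre_block_def
    proof (intro conjI)
      show "B' \<noteq> {}" using B'_def by simp
      show "B' \<subseteq> D - {0}" using BD rD rm Bpos[OF mB] B'_def by auto
      show "2 * predD D (Min B') < Min B'" using pred minB' by simp
      show "\<forall>b\<in>B'. b < Max B' \<longrightarrow> succD D b \<in> B' \<and> b + Min B' \<ge> succD D b"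
      proof (intro ballI impI)
      fix b assume b: "b \<in> B'" and bl: "b < Max B'"
      then have bB: "b \<in> B" using B'_def maxB' by auto
      show "succD D b \<in> B' \<and> succD D b \<le> b + Min B'"
      proof (cases "b < m")
        case True
        then show ?thesis using succ[OF bB] m_def minB' B'_def by auto
      next
        case False
        then have "b = m" using leM[OF bB] by simp
        then show ?thesis using r_def rle minB' minB B'_def by simp
      qed
      qed
    qed
    moreover have "B \<subseteq> B'" using B'_def by auto
    ultimately have "B' = B" by (rule maxi)
    then have "r \<in> B" using B'_def by auto
    then show False using leM rm by force
  qed
  define Bj where "Bj = {b \<in> B. m + b < r}"
  have finBj: "finite Bj" using finB Bj_def by simp
  have b0Bj: "b0 \<in> Bj" using b0B b0_def step1 Bj_def by simp
  define bj where "bj = Max Bj"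
  have bjBj: "bj \<in> Bj" using Max_in[OF finBj] b0Bj bj_def by blast
  have bjB: "bj \<in> B" and bjr: "m + bj < r" using bjBj Bj_def by auto
  have bjmax: "b \<in> Bj \<Longrightarrow> b \<le> bj" for b using finBj bj_def by simp
  have bjm: "bj < m" using bjr r2m leM[OF bjB] by (cases "bj = m") auto
  define c where "c = succD D bj"
  have cB: "c \<in> B" and cle: "c \<le> bj + b0" using succ[OF bjB] bjm m_def minB c_def by auto
  have cgt: "c > bj"
  proof -
    define Sb where "Sb = {u \<in> D. u > bj}"
    have "finite Sb" using finD Sb_def by simp
    moreover have "Sb \<noteq> {}" using mD bjm Sb_def by auto
    ultimately have "Min Sb \<in> Sb" by (rule Min_in)
    then show ?thesis using c_def Sb_def by (simp add: succD_def)
  qed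
  have mc: "m + c \<ge> r"
  proof (rule ccontr)
    assume "\<not> m + c \<ge> r"
    then have "c \<in> Bj" using cB Bj_def by simp
    then show False using bjmax cgt by force
  qed
  have cD: "c \<in> D" and cpos: "c > 0" using cB BD Bpos by auto
  have cm: "c \<le> m" using leM[OF cB] .
  have bjpos: "bj > 0" using Bpos[OF bjB] .
  have bjD: "bj \<in> D" using bjB BD by blast
  have b0D: "b0 \<in> D" using b0B BD b0_def by blast
  have b0bj: "b0 \<le> bj" using b0le[OF bjB] .
  obtain p where pM: "p \<in> M" using M_ne by blast
  obtain q where q: "q \<in> M" "q \<notin> {p}" "\<forall>x\<in>{p}. d q x = c"
    using EP[of "{p}" "\<lambda>_. c"] pM cD cpos d_self[OF pM] by auto
  have qp: "d q p = c" "d p q = c" using q d_sym[OF q(1) pM] by auto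
  have pq: "p \<noteq> q" using q(2) by simp
  define ta where "ta z = (if z = p then r else m)" for z
  obtain a where a: "a \<in> M" "a \<notin> {p, q}" "\<forall>x\<in>{p, q}. d a x = ta x"
  proof -
    have "\<exists>a\<in>M. a \<notin> {p, q} \<and> (\<forall>x\<in>{p, q}. d a x = ta x)"
    proof (rule EP)
      show "finite {p, q}" by simp
      show "{p, q} \<subseteq> M" using pM q(1) by simp
      show "\<forall>x\<in>{p, q}. ta x \<in> D \<and> 0 < ta x" using rD rm mD Bpos[OF mB] pq by (auto simp: ta_def)
      show "\<forall>x\<in>{p, q}. \<forall>y\<in>{p, q}. \<bar>ta x - ta y\<bar> \<le> d x y \<and> d x y \<le> ta x + ta y"
        using qp pq d_self[OF pM] d_self[OF q(1)] mc cm rm Bpos[OF mB]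
        by (auto simp: ta_def abs_le_iff)
    qed
    then show ?thesis using that by blast
  qed
  define tb where "tb z = (if z = p then b0 else bj)" for z
  obtain b where b: "b \<in> M" "b \<notin> {p, q}" "\<forall>x\<in>{p, q}. d b x = tb x"
  proof -
    have "\<exists>b\<in>M. b \<notin> {p, q} \<and> (\<forall>x\<in>{p, q}. d b x = tb x)"
    proof (rule EP)
      show "finite {p, q}" by simp
      show "{p, q} \<subseteq> M" using pM q(1) by simp
      show "\<forall>x\<in>{p, q}. tb x \<in> D \<and> 0 < tb x" using b0D b0pos bjD bjpos pq by (auto simp: tb_def)
      show "\<forall>x\<in>{p, q}. \<forall>y\<in>{p, q}. \<bar>tb x - tb y\<bar> \<le> d x y \<and> d x y \<le> tb x + tb y"
        using qp pq d_self[OF pM] d_self[OF q(1)] cle cgt b0bj b0pos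
        by (auto simp: tb_def abs_le_iff)
    qed
    then show ?thesis using that by blast
  qed
  have ap: "d a p = r" and aq: "d a q = m" using a(3) pq by (auto simp: ta_def)
  have bp: "d b p = b0" and bq: "d b q = bj" using b(3) pq by (auto simp: tb_def)
  have t1: "d a p \<le> d a b + d b p" using d_tri[OF a(1) b(1) pM] .
  have t2: "d a b \<le> d a q + d q b" using d_tri[OF a(1) q(1) b(1)] .
  have qb: "d q b = bj" using bq d_sym[OF q(1) b(1)] by simp
  have e1: "d a b > m" using t1 ap bp step1 by simp
  have e2: "d a b < r" using t2 aq qb bjr by simp
  have "d a b \<in> D" using d_D[OF a(1) b(1)] .
  then have "r \<le> d a b" using rmin e1 by simp
  then show False using e2 by simp
qed

end

theorem lemma9p3:
  fixes D :: "real set" and M :: "'a set" and d :: "'a \<Rightarrow> 'a \<Rightarrow> real"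
    and B :: "real set" and m :: real
  assumes "finite D" and "0 \<in> D" and "\<forall>r\<in>D. r \<ge> 0"
    and "universal_dist D"
    and "\<exists>B1 B2. B1 \<in> blocks D \<and> B2 \<in> blocks D \<and> B1 \<noteq> B2"
    and "B \<in> blocks D" and "Min (D - {0}) \<in> B"
    and "m = Max B"
    and "in_U D M d"
  shows "universal_dist (dist_set (M // close_rel M d m) (dmin d))
         \<and> in_U (dist_set (M // close_rel M d m) (dmin d)) (M // close_rel M d m) (dmin d)
         \<and> (\<forall>N. (\<exists>f. iso_emb (M // close_rel M d m) (dmin d) (M // close_rel M d m) (dmin d) f
                     \<and> N = f ` (M // close_rel M d m))
               \<longrightarrow> (\<exists>g. iso_emb M d M d g \<and> g ` M = \<Union>N))"
proof -
  interpret UL D M d using assms(9,1,2) by unfold_locales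
  have pb: "pre_block D B" using assms(6) by (simp add: blocks_def)
  have Bne: "B \<noteq> {}" and BD: "B \<subseteq> D - {0}" using pb by (auto simp: pre_block_def)
  have finB: "finite B" using BD assms(1) finite_subset by blast
  have mB: "m \<in> B" using Max_in[OF finB Bne] assms(8) by simp
  have mD: "m \<in> D" and mpos: "m > 0" using mB BD assms(3) by force+
  have gap: "\<forall>s\<in>D. m < s \<longrightarrow> 2*m < s" using gap_from_block[OF assms(6,7,3)] assms(8) by simp
  interpret QL D M d m using mD mpos gap by unfold_locales
  show ?thesis using inUQ universal_of_inU[OF inUQ] part3 by blast
qed


end
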